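(* Let $N,M$ be positive integers with $M>N$, $t$ a complex parameter, $w(x)=e^{-\frac{M}{2}x}x^{\frac{M-N-1}{2}}(t-x)^{-\frac12}$, $L_k$ the monic orthogonal polynomials of degree $k$ on $(0,\infty)$ for the weight $w_0(x)=x^{M-N}e^{-Mx}$, and $\langle\cdot,\cdot\rangle_1$ the skew product defined below. Every polynomial $P$ can be written uniquely as $$P(x)=\frac{d}{dx}\big(q(x)x(t-x)w(x)\big)w^{-1}(x)+R(x)$$ with $q$ a polynomial and $R$ a polynomial of degree at most $1$; let $f$ be the linear map $P\mapsto R$, and let $\varrho_k$ be the restriction of $f$ to the linear span of $L_k$ and $L_{k-1}$. If $\langle L_k,L_{k-1}\rangle_1\neq0$, then $\varrho_k$ is invertible (as a linear map from $\mathrm{span}\{L_k,L_{k-1}\}$ onto the polynomials of degree at most $1$).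
   Context: The skew product is $\langle f,g\rangle_1=\int_0^\infty\int_0^\infty\epsilon(x-y)f(x)g(y)w(x)w(y)\,dx\,dy$ with $\epsilon(x)=\frac12\mathrm{sgn}(x)$; the branch of $(t-x)^{-1/2}$ has its cut on $\arg(t-x)=\pi$, and if $t\in(0,\infty)$ the contour $(0,\infty)$ is deformed into the upper or lower half plane near $t$. *)

theory Defs
  imports "HOL-Analysis.Analysis" "HOL-Computational_Algebra.Polynomial"
begin

text \<open>Off the cut (-oo,0] the principal branch is used.  On the cut z = -r (r > 0)
  the boundary value is taken: \<sigma> = True means the contour is deformed into the
  upper half plane (so Im(t-x) < 0, limit from below the cut, value i/sqrt r),
  \<sigma> = False means the lower half plane (value -i/sqrt r).\<close>
definition br :: "bool \<Rightarrow> complex \<Rightarrow> complex" where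
  "br \<sigma> z = (if Im z = 0 \<and> Re z < 0
      then (if \<sigma> then \<i> else - \<i>) / complex_of_real (sqrt (- Re z))
      else z powr (-1/2))"

definition wgt :: "nat \<Rightarrow> nat \<Rightarrow> complex \<Rightarrow> bool \<Rightarrow> real \<Rightarrow> complex" where
  "wgt M N t \<sigma> x = complex_of_real (exp (- real M * x / 2) * x powr ((real M - real N - 1) / 2))
                    * br \<sigma> (t - complex_of_real x)"

definition skew :: "nat \<Rightarrow> nat \<Rightarrow> complex \<Rightarrow> bool \<Rightarrow> complex poly \<Rightarrow> complex poly \<Rightarrow> complex" where
  "skew M N t \<sigma> f g =
     (LINT y:{0<..}|lborel. (LINT x:{0<..}|lborel.
        complex_of_real (sgn (x - y) / 2) * poly f (complex_of_real x) * poly g (complex_of_real y)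
        * wgt M N t \<sigma> x * wgt M N t \<sigma> y))"

definition Dop :: "nat \<Rightarrow> nat \<Rightarrow> complex \<Rightarrow> bool \<Rightarrow> complex poly \<Rightarrow> complex poly" where
  "Dop M N t \<sigma> q = (THE P. \<forall>x::real. x > 0 \<and> complex_of_real x \<noteq> t \<longrightarrow>
      ((\<lambda>s. poly q (complex_of_real s) * complex_of_real s * (t - complex_of_real s) * wgt M N t \<sigma> s)
        has_vector_derivative (poly P (complex_of_real x) * wgt M N t \<sigma> x)) (at x))"

definition fmap :: "nat \<Rightarrow> nat \<Rightarrow> complex \<Rightarrow> bool \<Rightarrow> complex poly \<Rightarrow> complex poly" where
  "fmap M N t \<sigma> P = (THE R. degree R \<le> 1 \<and> (\<exists>q. P = Dop M N t \<sigma> q + R))"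

definition w0 :: "nat \<Rightarrow> nat \<Rightarrow> real \<Rightarrow> real" where
  "w0 M N x = x ^ (M - N) * exp (- real M * x)"

end

theory Submission
  imports Defs
begin

definition aa :: "nat \<Rightarrow> nat \<Rightarrow> real" where "aa M N = (real M - real N - 1) / 2"

definition Bx :: "nat \<Rightarrow> nat \<Rightarrow> complex \<Rightarrow> complex poly \<Rightarrow> complex poly" where
  "Bx M N t q = pderiv (q * [:0,t,-1:]) + smult (- of_nat M / 2) (q * [:0,t:])
      + smult (of_real (aa M N)) (q * [:t,-1:]) + smult (1/2) (q * [:0,1:])"

definition Dx :: "nat \<Rightarrow> nat \<Rightarrow> complex \<Rightarrow> complex poly \<Rightarrow> complex poly" where
  "Dx M N t q = pderiv (q * [:0,t,-1:]) + smult (- of_nat M / 2) (q * [:0,t,-1:])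
      + smult (of_real (aa M N)) (q * [:t,-1:]) + smult (1/2) (q * [:0,1:])"

lemma pc_split: "[:0,t,-1:] = [:0,t:] - [:0,0,1::complex:]"
  by simp

lemma Dx_decomp: "Dx M N t q = smult (of_nat M / 2) (q * [:0,0,1:]) + Bx M N t q"
proof -
  have "smult (- of_nat M / 2) (q * [:0,t,-1:]) = smult (of_nat M / 2) (q * [:0,0,1:]) + smult (- of_nat M / 2) (q * [:0,t:])"
    unfolding pc_split right_diff_distrib smult_diff_right by (simp add: smult_minus_left)
  then show ?thesis unfolding Dx_def Bx_def by (simp add: algebra_simps)
qed

lemma degree_Bx: "degree (Bx M N t q) \<le> degree q + 1"
proof -
  have d1: "degree (q * [:0,t,-1:]) \<le> degree q + 2"
    by (rule order.trans[OF degree_mult_le]) simp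
  have "degree (pderiv (q * [:0,t,-1:])) \<le> degree q + 1"
    using d1 by (simp add: degree_pderiv)
  moreover have "degree (smult (- of_nat M / 2) (q * [:0,t:])) \<le> degree q + 1"
    by (rule order.trans[OF degree_smult_le], rule order.trans[OF degree_mult_le]) simp
  moreover have "degree (smult (of_real (aa M N)) (q * [:t,-1:])) \<le> degree q + 1"
    by (rule order.trans[OF degree_smult_le], rule order.trans[OF degree_mult_le]) simp
  moreover have "degree (smult (1/2) (q * [:0,1:])) \<le> degree q + 1"
    by (rule order.trans[OF degree_smult_le], rule order.trans[OF degree_mult_le]) simp
  ultimately show ?thesis unfolding Bx_def
    by (intro degree_add_le) auto
qed

lemma Dx_degree:
  assumes "q \<noteq> 0" "M > 0"
  shows "degree (Dx M N t q) = degree q + 2"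
    and "coeff (Dx M N t q) (degree q + 2) = of_nat M / 2 * lead_coeff q"
proof -
  have dA: "degree (smult (of_nat M / 2 :: complex) (q * [:0,0,1:])) = degree q + 2"
    using assms by (simp add: degree_mult_eq)
  have lt: "degree (Bx M N t q) < degree (smult (of_nat M / 2 :: complex) (q * [:0,0,1:]))"
    using degree_Bx[of M N t q] dA by simp
  show "degree (Dx M N t q) = degree q + 2"
    unfolding Dx_decomp using degree_add_eq_left[OF lt] dA by simp
  have "coeff (Bx M N t q) (degree q + 2) = 0"
    using degree_Bx[of M N t q] by (intro coeff_eq_0) simp
  moreover have "coeff (q * [:0,0,1:]) (degree q + 2) = lead_coeff q"
    using coeff_mult_degree_sum[of q "[:0,0,1::complex:]"] by simp
  ultimately show "coeff (Dx M N t q) (degree q + 2) = of_nat M / 2 * lead_coeff q"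
    unfolding Dx_decomp by simp
qed

lemma Dx_add: "Dx M N t (p + q) = Dx M N t p + Dx M N t q"
  by (simp only: Dx_def distrib_right pderiv_add smult_add_right add_ac)

lemma Dx_smult: "Dx M N t (smult c q) = smult c (Dx M N t q)"
  by (simp only: Dx_def mult_smult_left pderiv_smult smult_add_right smult_smult mult.commute)

lemma Dx_0[simp]: "Dx M N t 0 = 0"
  unfolding Dx_def by simp

lemma Dx_diff: "Dx M N t (p - q) = Dx M N t p - Dx M N t q"
  using Dx_add[of M N t "p - q" q] by simp

lemma Dx_inj:
  assumes "M > 0" "degree (Dx M N t q) \<le> 1"
  shows "q = 0"
  using Dx_degree[of q M N t] assms by (cases "q = 0") auto

lemma decomp_exists:
  assumes "M > 0"
  shows "\<exists>q R. degree R \<le> 1 \<and> P = Dx M N t q + R"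
proof (induction "degree P" arbitrary: P rule: less_induct)
  case less
  show ?case
  proof (cases "degree P \<le> 1")
    case True
    then show ?thesis by (intro exI[of _ 0] exI[of _ P]) simp
  next
    case False
    define n where "n = degree P - 2"
    have dn: "degree P = n + 2" using False n_def by simp
    define c where "c = lead_coeff P / (of_nat M / 2)"
    define q1 where "q1 = monom c n"
    have Pnz: "P \<noteq> 0" using False by auto
    hence c0: "c \<noteq> 0" using assms by (simp add: c_def)
    have dq1: "degree q1 = n" "q1 \<noteq> 0" using c0 by (simp_all add: q1_def degree_monom_eq)
    have D1: "degree (Dx M N t q1) = n + 2" "coeff (Dx M N t q1) (n + 2) = lead_coeff P"
      using Dx_degree[of q1 M N t] dq1 assms by (simp_all add: q1_def c_def)
    define P' where "P' = P - Dx M N t q1"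
    have "degree P' \<le> n + 2" unfolding P'_def using D1 dn
      by (intro degree_diff_le) auto
    moreover have "coeff P' (n + 2) = 0" unfolding P'_def using D1 dn by simp
    ultimately have "degree P' < degree P"
      using dn by (metis add_gr_0 le_neq_implies_less leading_coeff_0_iff degree_0 zero_less_numeral)
    from less(1)[OF this] obtain q R where "degree R \<le> 1" "P' = Dx M N t q + R" by blast
    then show ?thesis unfolding P'_def
      by (intro exI[of _ "q + q1"] exI[of _ R]) (auto simp: Dx_add algebra_simps)
  qed
qed

lemma decomp_unique:
  assumes "M > 0" "degree R1 \<le> 1" "degree R2 \<le> 1" "Dx M N t q1 + R1 = Dx M N t q2 + R2"
  shows "q1 = q2 \<and> R1 = R2"
proof -
  have "Dx M N t (q1 - q2) = R2 - R1" using assms(4) by (simp add: Dx_diff algebra_simps)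
  moreover have "degree (R2 - R1) \<le> 1" using assms(2,3) by (meson degree_diff_le)
  ultimately have "q1 - q2 = 0" using Dx_inj[OF assms(1)] by metis
  thus ?thesis using assms(4) by simp
qed

lemma br_norm:
  assumes "z \<noteq> 0"
  shows "norm (br \<sigma> z) = 1 / sqrt (norm z)"
proof (cases "Im z = 0 \<and> Re z < 0")
  case True
  then have "norm z = - Re z" by (simp add: cmod_def)
  then show ?thesis using True by (simp add: br_def norm_divide)
next
  case False
  have "(-1/2 :: complex) \<in> \<real>" by (metis Reals_of_real of_real_divide of_real_minus of_real_1 of_real_numeral)
  then have "norm (z powr (-1/2)) = norm z powr (-1/2)"
    using norm_powr_real_powr' by simp
  also have "\<dots> = 1 / sqrt (norm z)"
    using assms by (simp add: powr_minus_divide powr_half_sqrt)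
  moreover have "br \<sigma> z = z powr (-1/2)" unfolding br_def by (rule if_not_P[OF False])
  ultimately show ?thesis by simp
qed

lemma br_zero: "br \<sigma> 0 = 0"
  by (simp add: br_def)

lemma br_sq:
  assumes "z \<noteq> 0"
  shows "z * (br \<sigma> z)^2 = 1"
proof (cases "Im z = 0 \<and> Re z < 0")
  case True
  then have z: "z = of_real (Re z)" by (simp add: complex_eq_iff)
  have sq: "(complex_of_real (sqrt (- Re z)))^2 = of_real (- Re z)"
    using True by (simp flip: of_real_power)
  have "(br \<sigma> z)^2 = -1 / of_real (- Re z)"
    using True by (simp add: br_def power_divide sq)
  then show ?thesis using True by (subst z) (simp add: field_simps)
next
  case False
  have "(z powr (-1/2))^2 = z powr (of_nat 2 * (-1/2))"
    using assms by (rule powr_power)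
  also have "\<dots> = inverse z" by (simp add: powr_minus)
  moreover have "br \<sigma> z = z powr (-1/2)" unfolding br_def by (rule if_not_P[OF False])
  ultimately show ?thesis using assms by (simp add: field_simps)
qed

lemma br_deriv:
  assumes "t - complex_of_real x \<noteq> 0"
  shows "((\<lambda>s. br \<sigma> (t - complex_of_real s)) has_vector_derivative
            (br \<sigma> (t - complex_of_real x) / (2 * (t - complex_of_real x)))) (at x)"
proof (cases "Im t = 0 \<and> x > Re t")
  case True
  define r where "r = Re t"
  define c :: complex where "c = (if \<sigma> then \<i> else - \<i>)"
  have t: "t = of_real r" using True by (simp add: r_def complex_eq_iff)
  have eq: "br \<sigma> (t - complex_of_real s) = c * of_real (inverse (sqrt (s - r)))" if "s \<in> {r<..}" for s
    using that True by (simp add: br_def t c_def divide_inverse)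
  have xr: "x - r > 0" using True r_def by simp
  have d1: "((\<lambda>s. sqrt (s - r)) has_real_derivative (inverse (sqrt (x - r)) / 2 * 1)) (at x)"
  proof -
    have "((\<lambda>s. s - r) has_real_derivative 1) (at x)" by (auto intro!: derivative_eq_intros)
    from DERIV_chain2[where f=sqrt and g="\<lambda>s. s - r", OF DERIV_real_sqrt[OF xr] this]
    show ?thesis by simp
  qed
  have d2: "((\<lambda>s. inverse (sqrt (s - r))) has_real_derivative
      (- (inverse (sqrt (x - r)) / 2 * 1 * inverse (sqrt (x - r) ^ Suc (Suc 0))))) (at x)"
    by (rule DERIV_inverse_fun[OF d1]) (use xr in simp)
  have "((\<lambda>s. c * of_real (inverse (sqrt (s - r)))) has_vector_derivative
      (c * of_real (- (inverse (sqrt (x - r)) / 2 * 1 * inverse (sqrt (x - r) ^ Suc (Suc 0)))))) (at x)"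
    by (intro has_vector_derivative_mult_right has_vector_derivative_of_real d2)
  then have D1: "((\<lambda>s. br \<sigma> (t - complex_of_real s)) has_vector_derivative
      (c * of_real (- (inverse (sqrt (x - r)) / 2 * 1 * inverse (sqrt (x - r) ^ Suc (Suc 0)))))) (at x)"
    by (rule has_vector_derivative_transform_within_open[where S="{r<..}"])
       (use True eq r_def in auto)
  have E: "c * of_real (- (inverse (sqrt (x - r)) / 2 * 1 * inverse (sqrt (x - r) ^ Suc (Suc 0))))
       = br \<sigma> (t - complex_of_real x) / (2 * (t - complex_of_real x))"
  proof -
    have "- (inverse (sqrt (x - r)) / 2 * 1 * inverse (sqrt (x - r) ^ Suc (Suc 0))) = inverse (sqrt (x - r)) / (2 * (r - x))"
      using xr by (simp add: field_simps)
    then have "c * of_real (- (inverse (sqrt (x - r)) / 2 * 1 * inverse (sqrt (x - r) ^ Suc (Suc 0))))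
       = c * of_real (inverse (sqrt (x - r)) / (2 * (r - x)))" by simp
    also have "\<dots> = c * of_real (inverse (sqrt (x - r))) / (2 * (t - of_real x))" by (simp add: t)
    also have "\<dots> = br \<sigma> (t - complex_of_real x) / (2 * (t - complex_of_real x))"
      using eq[of x] xr by simp
    finally show ?thesis .
  qed
  show ?thesis using D1 unfolding E .
next
  case False
  define S where "S = {s. t - complex_of_real s \<notin> \<real>\<^sub>\<le>\<^sub>0}"
  have xS: "x \<in> S" using False assms
    by (auto simp: S_def complex_nonpos_Reals_iff complex_eq_iff)
  have openS: "open S"
  proof -
    have "S = (\<lambda>s. t - complex_of_real s) -` (- \<real>\<^sub>\<le>\<^sub>0)" by (auto simp: S_def)
    moreover have "open ((\<lambda>s. t - complex_of_real s) -` (- \<real>\<^sub>\<le>\<^sub>0))"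
      by (intro open_vimage) (auto intro!: continuous_intros)
    ultimately show ?thesis by simp
  qed
  have eq: "br \<sigma> (t - complex_of_real s) = (t - complex_of_real s) powr (-1/2)" if "s \<in> S" for s
    using that by (auto simp: br_def S_def complex_nonpos_Reals_iff)
  have z: "t - complex_of_real x \<notin> \<real>\<^sub>\<le>\<^sub>0" using xS by (simp add: S_def)
  have "((\<lambda>z. (t - z) powr (-1/2)) has_field_derivative
          ((-1/2) * (t - complex_of_real x) powr (-1/2 - 1) * (-1))) (at (complex_of_real x))"
  proof -
    have "((\<lambda>z. t - z) has_field_derivative (-1)) (at (complex_of_real x))"
      by (auto intro!: derivative_eq_intros)
    from DERIV_chain2[where f="\<lambda>z. z powr (-1/2)" and g="\<lambda>z. t - z",
        OF has_field_derivative_powr[OF z] this]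
    show ?thesis by simp
  qed
  then have "((\<lambda>s. (t - complex_of_real s) powr (-1/2)) has_vector_derivative
          ((-1/2) * (t - complex_of_real x) powr (-1/2 - 1) * (-1))) (at x)"
    by (rule has_vector_derivative_real_field)
  then have D: "((\<lambda>s. br \<sigma> (t - complex_of_real s)) has_vector_derivative
          ((-1/2) * (t - complex_of_real x) powr (-1/2 - 1) * (-1))) (at x)"
    by (rule has_vector_derivative_transform_within_open[OF _ openS xS]) (simp add: eq)
  have E: "(-1/2) * (t - complex_of_real x) powr (-1/2 - 1) * (-1) =
      br \<sigma> (t - complex_of_real x) / (2 * (t - complex_of_real x))"
  proof -
    have "(t - complex_of_real x) powr (-1/2 - 1) = (t - complex_of_real x) powr (-1/2) / (t - complex_of_real x)"
      by (simp only: powr_diff powr_to_1)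
    moreover have "\<And>w P Q :: complex. w \<noteq> 0 \<Longrightarrow> P = Q / w \<Longrightarrow> (-1/2) * P * (-1) = Q / (2 * w)"
      by (simp add: field_simps)
    ultimately show ?thesis unfolding eq[OF xS] using assms by blast
  qed
  show ?thesis using D unfolding E .
qed

definition uu :: "nat \<Rightarrow> nat \<Rightarrow> complex \<Rightarrow> bool \<Rightarrow> complex poly \<Rightarrow> real \<Rightarrow> complex" where
  "uu M N t \<sigma> q s = poly q (complex_of_real s) * complex_of_real s * (t - complex_of_real s) * wgt M N t \<sigma> s"

lemma e_deriv:
  assumes "x > 0"
  shows "((\<lambda>s. exp (- real M * s / 2) * s powr a) has_real_derivative
           (exp (- real M * x / 2) * x powr a * (- real M / 2 + a / x))) (at x)"
proof -
  have "((\<lambda>s. exp (- real M * s / 2) * s powr a) has_real_derivative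
           (exp (- real M * x / 2) * (- real M / 2) * x powr a + exp (- real M * x / 2) * (a * x powr (a - 1)))) (at x)"
    using assms by (auto intro!: derivative_eq_intros simp: field_simps)
  moreover have "x powr (a - 1) = x powr a / x" using assms by (simp add: powr_diff)
  ultimately show ?thesis using assms by (simp add: field_simps)
qed

lemma wgt_deriv:
  assumes "x > 0" "t - complex_of_real x \<noteq> 0"
  shows "(wgt M N t \<sigma> has_vector_derivative
      (wgt M N t \<sigma> x * (- of_nat M / 2 + of_real (aa M N) / of_real x + 1 / (2 * (t - of_real x))))) (at x)"
proof -
  have ee: "(\<lambda>s. exp (- real M * s / 2) * s powr ((real M - real N - 1) / 2)) = (\<lambda>s. exp (- real M * s / 2) * s powr (aa M N))"
    by (simp add: aa_def)
  have d: "(wgt M N t \<sigma> has_vector_derivative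
      (complex_of_real (exp (- real M * x / 2) * x powr (aa M N)) * (br \<sigma> (t - complex_of_real x) / (2 * (t - complex_of_real x)))
      + complex_of_real (exp (- real M * x / 2) * x powr (aa M N) * (- real M / 2 + aa M N / x)) * br \<sigma> (t - complex_of_real x))) (at x)"
    unfolding wgt_def aa_def
    by (intro has_vector_derivative_mult has_vector_derivative_of_real e_deriv br_deriv assms)
  have "complex_of_real (exp (- real M * x / 2) * x powr (aa M N)) * (br \<sigma> (t - complex_of_real x) / (2 * (t - complex_of_real x)))
      + complex_of_real (exp (- real M * x / 2) * x powr (aa M N) * (- real M / 2 + aa M N / x)) * br \<sigma> (t - complex_of_real x)
      = wgt M N t \<sigma> x * (- of_nat M / 2 + of_real (aa M N) / of_real x + 1 / (2 * (t - of_real x)))"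
    unfolding wgt_def using assms by (simp add: aa_def field_simps)
  then show ?thesis using d by simp
qed

lemma wgt_nz:
  assumes "x > 0" "t - complex_of_real x \<noteq> 0"
  shows "wgt M N t \<sigma> x \<noteq> 0"
proof -
  have "norm (br \<sigma> (t - complex_of_real x)) \<noteq> 0" using br_norm[OF assms(2)] assms by simp
  then show ?thesis using assms unfolding wgt_def by auto
qed

lemma poly_Qp: "poly (q * [:0,t,-1:]) z = poly q z * z * (t - (z::complex))"
proof -
  have "poly [:0,t,-1:] z = z * (t - z)" by (simp add: right_diff_distrib)
  then show ?thesis by (simp add: algebra_simps)
qed

lemma uu_deriv:
  assumes "x > 0" "t - complex_of_real x \<noteq> 0"
  shows "(uu M N t \<sigma> q has_vector_derivative (poly (Dx M N t q) (complex_of_real x) * wgt M N t \<sigma> x)) (at x)"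
proof -
  define Qp where "Qp = q * [:0,t,-1:]"
  have u: "uu M N t \<sigma> q = (\<lambda>s. poly Qp (complex_of_real s) * wgt M N t \<sigma> s)"
    by (rule ext) (simp only: uu_def Qp_def poly_Qp)
  have "((\<lambda>s. poly Qp (complex_of_real s) * wgt M N t \<sigma> s) has_vector_derivative
       (poly Qp (complex_of_real x) * (wgt M N t \<sigma> x * (- of_nat M / 2 + of_real (aa M N) / of_real x + 1 / (2 * (t - of_real x))))
        + poly (pderiv Qp) (complex_of_real x) * wgt M N t \<sigma> x)) (at x)"
    by (intro has_vector_derivative_mult wgt_deriv assms has_vector_derivative_real_field poly_DERIV)
  moreover have "poly Qp (complex_of_real x) * (wgt M N t \<sigma> x * (- of_nat M / 2 + of_real (aa M N) / of_real x + 1 / (2 * (t - of_real x))))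
        + poly (pderiv Qp) (complex_of_real x) * wgt M N t \<sigma> x = poly (Dx M N t q) (complex_of_real x) * wgt M N t \<sigma> x"
    using assms unfolding Dx_def Qp_def[symmetric]
    by (simp add: Qp_def poly_Qp field_simps)
  ultimately show ?thesis unfolding u by simp
qed

lemma Dop_eq:
  assumes "M > 0"
  shows "Dop M N t \<sigma> q = Dx M N t q"
  unfolding Dop_def
proof (rule the_equality)
  show "\<forall>x. x > 0 \<and> complex_of_real x \<noteq> t \<longrightarrow>
      ((\<lambda>s. poly q (complex_of_real s) * complex_of_real s * (t - complex_of_real s) * wgt M N t \<sigma> s)
        has_vector_derivative poly (Dx M N t q) (complex_of_real x) * wgt M N t \<sigma> x) (at x)"
    using uu_deriv[of _ t M N \<sigma> q] unfolding uu_def[abs_def] by auto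
next
  fix P
  assume P: "\<forall>x. x > 0 \<and> complex_of_real x \<noteq> t \<longrightarrow>
      ((\<lambda>s. poly q (complex_of_real s) * complex_of_real s * (t - complex_of_real s) * wgt M N t \<sigma> s)
        has_vector_derivative poly P (complex_of_real x) * wgt M N t \<sigma> x) (at x)"
  have z: "poly (P - Dx M N t q) (complex_of_real x) = 0" if "x \<in> {0<..} - {Re t}" for x
  proof -
    have x: "x > 0" "t - complex_of_real x \<noteq> 0" using that by (auto simp: complex_eq_iff)
    have "poly P (complex_of_real x) * wgt M N t \<sigma> x = poly (Dx M N t q) (complex_of_real x) * wgt M N t \<sigma> x"
    proof (rule vector_derivative_unique_at)
      show "((\<lambda>s. poly q (complex_of_real s) * complex_of_real s * (t - complex_of_real s) * wgt M N t \<sigma> s)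
        has_vector_derivative poly P (complex_of_real x) * wgt M N t \<sigma> x) (at x)"
        using P x by auto
      show "((\<lambda>s. poly q (complex_of_real s) * complex_of_real s * (t - complex_of_real s) * wgt M N t \<sigma> s)
        has_vector_derivative poly (Dx M N t q) (complex_of_real x) * wgt M N t \<sigma> x) (at x)"
        using uu_deriv[OF x, of M N \<sigma> q] unfolding uu_def[abs_def] by simp
    qed
    then show ?thesis using wgt_nz[OF x, of M N \<sigma>] by simp
  qed
  have inf: "infinite (complex_of_real ` ({0<..} - {Re t}))"
  proof
    assume "finite (complex_of_real ` ({0<..} - {Re t}))"
    then have "finite ({0<..} - {Re t} :: real set)"
      by (rule finite_imageD) (auto intro: inj_onI)
    then have fin: "finite ({0<..} :: real set)" by simp
    have sub: "{0<..<1} \<subseteq> ({0<..} :: real set)" by auto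
    have "finite {0<..<1::real}" by (rule finite_subset[OF sub fin])
    then show False using infinite_Ioo[of "0::real" 1] by simp
  qed
  show "P = Dx M N t q"
  proof (rule ccontr)
    assume "P \<noteq> Dx M N t q"
    then have "finite {z. poly (P - Dx M N t q) z = 0}" by (intro poly_roots_finite) simp
    moreover have "complex_of_real ` ({0<..} - {Re t}) \<subseteq> {z. poly (P - Dx M N t q) z = 0}"
      using z by auto
    ultimately show False using inf finite_subset by blast
  qed
qed

lemma wgt_isCont:
  assumes "x > 0" "t - complex_of_real x \<noteq> 0"
  shows "isCont (wgt M N t \<sigma>) x"
  using wgt_deriv[OF assms] has_vector_derivative_continuous by blast

lemma K_norm: "norm ((t - complex_of_real s) * br \<sigma> (t - complex_of_real s)) = sqrt (norm (t - complex_of_real s))"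
proof (cases "t - complex_of_real s = 0")
  case True then show ?thesis by (simp add: br_zero)
next
  case False
  have "norm ((t - complex_of_real s) * br \<sigma> (t - complex_of_real s)) =
      norm (t - complex_of_real s) / sqrt (norm (t - complex_of_real s))"
    by (simp only: norm_mult br_norm[OF False]) simp
  then show ?thesis by (simp add: real_div_sqrt)
qed

lemma uu_isCont:
  assumes "x > 0"
  shows "isCont (uu M N t \<sigma> q) x"
proof (cases "t - complex_of_real x = 0")
  case False
  then show ?thesis using uu_deriv[OF assms False] has_vector_derivative_continuous by blast
next
  case True
  define A where "A = (\<lambda>s. poly q (complex_of_real s) * complex_of_real s *
      complex_of_real (exp (- real M * s / 2) * s powr ((real M - real N - 1) / 2)))"
  define K where "K = (\<lambda>s. (t - complex_of_real s) * br \<sigma> (t - complex_of_real s))"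
  have u: "uu M N t \<sigma> q = (\<lambda>s. A s * K s)"
    by (auto simp: uu_def A_def K_def wgt_def algebra_simps)
  have "isCont A x" unfolding A_def using assms by (intro continuous_intros) auto
  then have A: "(A \<longlongrightarrow> A x) (at x)" by (simp add: isCont_def)
  have "((\<lambda>s. norm (K s)) \<longlongrightarrow> sqrt (norm (t - complex_of_real x))) (at x)"
    unfolding K_def K_norm by (intro tendsto_intros)
  then have "((\<lambda>s. norm (K s)) \<longlongrightarrow> 0) (at x)" using True by simp
  then have "(K \<longlongrightarrow> 0) (at x)" by (simp add: tendsto_norm_zero_iff)
  from tendsto_mult[OF A this] have "((\<lambda>s. A s * K s) \<longlongrightarrow> 0) (at x)" by simp
  moreover have "K x = 0" using True by (simp add: K_def)
  ultimately show ?thesis unfolding u isCont_def by simp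
qed

lemma poly_bound:
  fixes p :: "complex poly"
  shows "\<exists>C n. C \<ge> 0 \<and> (\<forall>x\<ge>0. norm (poly p (complex_of_real x)) \<le> C * (1 + x) ^ n)"
proof (induction p)
  case 0
  then show ?case by (intro exI[of _ 0] exI[of _ 0]) simp
next
  case (pCons a p)
  then obtain C n where C: "C \<ge> 0" "\<forall>x\<ge>0. norm (poly p (complex_of_real x)) \<le> C * (1 + x) ^ n" by blast
  show ?case
  proof (intro exI[of _ "norm a + C"] exI[of _ "Suc n"] conjI allI impI)
    show "0 \<le> norm a + C" using C by simp
    fix x :: real assume x: "x \<ge> 0"
    have "norm (poly (pCons a p) (complex_of_real x)) \<le> norm a + x * norm (poly p (complex_of_real x))"
      using x by (simp add: norm_triangle_le norm_mult)
    also have "\<dots> \<le> norm a + x * (C * (1 + x) ^ n)"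
      using C x by (intro add_left_mono mult_left_mono) auto
    also have "\<dots> \<le> norm a * (1 + x) ^ Suc n + C * (1 + x) ^ Suc n"
    proof -
      have "1 \<le> (1 + x) ^ Suc n" using x by (intro one_le_power) simp
      then have "norm a \<le> norm a * (1 + x) ^ Suc n" by (simp add: mult_le_cancel_left1)
      moreover have "x * (C * (1 + x) ^ n) \<le> C * (1 + x) ^ Suc n"
        using C x by (simp add: mult_left_mono mult_right_mono algebra_simps)
      ultimately show ?thesis by simp
    qed
    finally show "norm (poly (pCons a p) (complex_of_real x)) \<le> (norm a + C) * (1 + x) ^ Suc n"
      by (simp add: algebra_simps)
  qed
qed

lemma exp_dom:
  "c > 0 \<Longrightarrow> \<exists>C. \<forall>x\<ge>0. (1 + x :: real) ^ K \<le> C * exp (c * x)"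
proof (induction K arbitrary: c)
  case 0
  then show ?case by (intro exI[of _ 1]) (auto simp: mult_nonneg_nonneg)
next
  case (Suc K)
  then obtain C1 where C1: "\<forall>x\<ge>0. (1 + x :: real) ^ K \<le> C1 * exp (c / 2 * x)" by (meson half_gt_zero)
  define C2 where "C2 = max 1 (2 / c)"
  have C2: "1 + x \<le> C2 * exp (c / 2 * x)" if "x \<ge> 0" for x
  proof -
    have e: "1 + c / 2 * x \<le> exp (c / 2 * x)" by (rule exp_ge_add_one_self)
    have "1 + x \<le> C2 * (1 + c / 2 * x)"
    proof (cases "c / 2 \<ge> 1")
      case True
      have "1 * x \<le> c / 2 * x" by (rule mult_right_mono) (use True that in auto)
      then have "x \<le> c / 2 * x" by simp
      moreover have "C2 \<ge> 1" by (simp add: C2_def)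
      moreover have "1 + c/2*x \<ge> 0" using that Suc by simp
      ultimately show ?thesis by (smt (verit) mult_le_cancel_right1 mult.commute)
    next
      case False
      then have C2e: "C2 = 2 / c" using Suc by (simp add: C2_def field_simps)
      have "C2 * (1 + c / 2 * x) = 2 / c + x" using Suc by (simp add: C2e field_simps)
      moreover have "2 / c \<ge> 1" using False Suc by (simp add: field_simps)
      ultimately show ?thesis by simp
    qed
    also have "\<dots> \<le> C2 * exp (c / 2 * x)" using e by (intro mult_left_mono) (auto simp: C2_def)
    finally show ?thesis .
  qed
  show ?case
  proof (intro exI[of _ "C2 * C1"] allI impI)
    fix x :: real assume x: "x \<ge> 0"
    have "(1 + x) ^ Suc K = (1 + x) * (1 + x) ^ K" by simp
    also have "\<dots> \<le> (C2 * exp (c / 2 * x)) * (C1 * exp (c / 2 * x))"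
      using C1 C2 x by (intro mult_mono) (auto simp: C2_def)
    also have "\<dots> = C2 * C1 * (exp (c / 2 * x) * exp (c / 2 * x))"
      by (simp add: algebra_simps)
    also have "exp (c / 2 * x) * exp (c / 2 * x) = exp (c * x)"
      by (simp only: exp_add[symmetric]) (rule arg_cong[where f=exp]; simp add: field_simps)
    finally show "(1 + x) ^ Suc K \<le> C2 * C1 * exp (c * x)" .
  qed
qed

lemma Fbound:
  fixes p :: "complex poly"
  assumes "M > 0" "a \<ge> 0"
  shows "\<exists>C. C \<ge> 0 \<and> (\<forall>x>0. norm (poly p (complex_of_real x)) * (exp (- real M * x / 2) * x powr a)
           \<le> C * exp (- (real M / 4) * x))"
proof -
  obtain C n where C: "C \<ge> 0" "\<forall>x\<ge>0. norm (poly p (complex_of_real x)) \<le> C * (1 + x) ^ n"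
    using poly_bound by blast
  define m where "m = nat (ceiling a)"
  have am: "a \<le> real m" unfolding m_def by linarith
  obtain C' where C': "\<forall>x\<ge>0. (1 + x :: real) ^ (n + m) \<le> C' * exp (real M / 4 * x)"
    using exp_dom[of "real M / 4" "n + m"] assms by auto
  show ?thesis
  proof (intro exI[of _ "C * C'"] conjI allI impI)
    have "0 \<le> C' * exp (real M / 4 * 0)" using C'[rule_format, of 0] by simp
    then show "0 \<le> C * C'" using C by simp
    fix x :: real assume x: "x > 0"
    have "x powr a \<le> (1 + x) powr a" using x assms by (intro powr_mono2) auto
    also have "\<dots> \<le> (1 + x) powr real m" using x am by (intro powr_mono) auto
    also have "\<dots> = (1 + x) ^ m" using x by (simp add: powr_realpow)
    finally have xa: "x powr a \<le> (1 + x) ^ m" .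
    have "norm (poly p (complex_of_real x)) * (exp (- real M * x / 2) * x powr a)
        \<le> (C * (1 + x) ^ n) * (exp (- real M * x / 2) * (1 + x) ^ m)"
      using C x xa by (intro mult_mono) auto
    also have "\<dots> = C * (1 + x) ^ (n + m) * exp (- real M * x / 2)"
      by (simp add: power_add algebra_simps)
    also have "\<dots> \<le> C * (C' * exp (real M / 4 * x)) * exp (- real M * x / 2)"
      using C C' x by (intro mult_right_mono mult_left_mono) auto
    also have "\<dots> = C * C' * (exp (real M / 4 * x) * exp (- real M * x / 2))"
      by (simp add: algebra_simps)
    also have "exp (real M / 4 * x) * exp (- real M * x / 2) = exp (- (real M / 4) * x)"
      by (simp only: exp_add[symmetric]) (rule arg_cong[where f=exp]; simp add: field_simps)
    finally show "norm (poly p (complex_of_real x)) * (exp (- real M * x / 2) * x powr a)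
           \<le> C * C' * exp (- (real M / 4) * x)" .
  qed
qed

lemma br_meas: "(\<lambda>x. br \<sigma> (t - complex_of_real x)) \<in> borel_measurable borel"
proof (rule borel_measurable_continuous_countable_exceptions[where X="{Re t}"])
  show "continuous_on (- {Re t}) (\<lambda>x. br \<sigma> (t - complex_of_real x))"
  proof (intro continuous_at_imp_continuous_on ballI)
    fix x assume "x \<in> - {Re t}"
    then have "t - complex_of_real x \<noteq> 0" by (auto simp: complex_eq_iff)
    from br_deriv[OF this, of \<sigma>] show "isCont (\<lambda>x. br \<sigma> (t - complex_of_real x)) x"
      using has_vector_derivative_continuous by blast
  qed
qed simp

lemma wgt_meas: "wgt M N t \<sigma> \<in> borel_measurable borel"
proof -
  have "(\<lambda>x. complex_of_real (exp (- real M * x / 2) * x powr ((real M - real N - 1) / 2))) \<in> borel_measurable borel"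
    by measurable
  then show ?thesis unfolding wgt_def[abs_def] using br_meas by measurable
qed

lemma Wp_meas: "(\<lambda>x. poly p (complex_of_real x) * wgt M N t \<sigma> x) \<in> borel_measurable borel"
proof -
  have "(\<lambda>x. poly p (complex_of_real x)) \<in> borel_measurable borel"
    by (intro borel_measurable_continuous_onI continuous_intros)
  then show ?thesis using wgt_meas by measurable
qed

lemma int_sing_left: "set_integrable lborel {r - 1<..<r} (\<lambda>x. 1 / sqrt (r - x))"
proof -
  have "set_integrable lborel (einterval (ereal (r - 1)) (ereal r)) (\<lambda>x. 1 / sqrt (r - x))"
  proof (rule interval_integral_FTC_nonneg(1)[where F="\<lambda>x. - 2 * sqrt (r - x)" and A="-2" and B=0])
    show "ereal (r - 1) < ereal r" by simp
    fix x assume x: "ereal (r - 1) < ereal x" "ereal x < ereal r"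
    then have xr: "r - x > 0" by simp
    show "((\<lambda>x. - 2 * sqrt (r - x)) has_real_derivative 1 / sqrt (r - x)) (at x)"
      using xr by (auto intro!: derivative_eq_intros simp: field_simps)
    show "isCont (\<lambda>x. 1 / sqrt (r - x)) x" using xr by (intro continuous_intros) auto
  next
    show "AE x in lborel. ereal (r - 1) < ereal x \<longrightarrow> ereal x < ereal r \<longrightarrow> 0 \<le> 1 / sqrt (r - x)"
      by auto
    have "((\<lambda>x. - 2 * sqrt (r - x)) \<longlongrightarrow> - 2 * sqrt (r - (r - 1))) (at_right (r - 1))"
      by (intro tendsto_intros)
    then show "(((\<lambda>x. - 2 * sqrt (r - x)) \<circ> real_of_ereal) \<longlongrightarrow> -2) (at_right (ereal (r - 1)))"
      by (simp add: ereal_tendsto_simps)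
    have "((\<lambda>x. - 2 * sqrt (r - x)) \<longlongrightarrow> - 2 * sqrt (r - r)) (at_left r)"
      by (intro tendsto_intros)
    then show "(((\<lambda>x. - 2 * sqrt (r - x)) \<circ> real_of_ereal) \<longlongrightarrow> 0) (at_left (ereal r))"
      by (simp add: ereal_tendsto_simps)
  qed
  then show ?thesis by simp
qed

lemma int_sing_right: "set_integrable lborel {r<..<r + 1} (\<lambda>x. 1 / sqrt (x - r))"
proof -
  have "set_integrable lborel (einterval (ereal r) (ereal (r + 1))) (\<lambda>x. 1 / sqrt (x - r))"
  proof (rule interval_integral_FTC_nonneg(1)[where F="\<lambda>x. 2 * sqrt (x - r)" and A="0" and B=2])
    show "ereal r < ereal (r + 1)" by simp
    fix x assume x: "ereal r < ereal x" "ereal x < ereal (r + 1)"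
    then have xr: "x - r > 0" by simp
    show "((\<lambda>x. 2 * sqrt (x - r)) has_real_derivative 1 / sqrt (x - r)) (at x)"
      using xr by (auto intro!: derivative_eq_intros simp: field_simps)
    show "isCont (\<lambda>x. 1 / sqrt (x - r)) x" using xr by (intro continuous_intros) auto
  next
    show "AE x in lborel. ereal r < ereal x \<longrightarrow> ereal x < ereal (r + 1) \<longrightarrow> 0 \<le> 1 / sqrt (x - r)"
      by auto
    have "((\<lambda>x. 2 * sqrt (x - r)) \<longlongrightarrow> 2 * sqrt (r - r)) (at_right r)"
      by (intro tendsto_intros)
    then show "(((\<lambda>x. 2 * sqrt (x - r)) \<circ> real_of_ereal) \<longlongrightarrow> 0) (at_right (ereal r))"
      by (simp add: ereal_tendsto_simps)
    have "((\<lambda>x. 2 * sqrt (x - r)) \<longlongrightarrow> 2 * sqrt (r + 1 - r)) (at_left (r + 1))"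
      by (intro tendsto_intros)
    then show "(((\<lambda>x. 2 * sqrt (x - r)) \<circ> real_of_ereal) \<longlongrightarrow> 2) (at_left (ereal (r + 1)))"
      by (simp add: ereal_tendsto_simps)
  qed
  then show ?thesis by simp
qed

lemma exp_neg_tendsto: "c > 0 \<Longrightarrow> ((\<lambda>x::real. exp (- c * x)) \<longlongrightarrow> 0) at_top"
proof -
  assume c: "c > 0"
  have "LIM x at_top. c * x :> at_top"
    by (rule filterlim_tendsto_pos_mult_at_top[OF tendsto_const c filterlim_ident])
  then have "LIM x at_top. - (c * x) :> at_bot"
    by (rule filterlim_compose[OF filterlim_uminus_at_bot_at_top])
  then show ?thesis by (simp add: filterlim_compose[OF exp_at_bot])
qed

lemma int_exp: "(c::real) > 0 \<Longrightarrow> set_integrable lborel {0<..} (\<lambda>x. exp (- c * x))"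
proof -
  assume c: "c > 0"
  have "set_integrable lborel (einterval (ereal 0) \<infinity>) (\<lambda>x. exp (- c * x))"
  proof (rule interval_integral_FTC_nonneg(1)[where F="\<lambda>x. - exp (- c * x) / c" and A="- 1 / c" and B=0])
    show "ereal 0 < \<infinity>" by simp
    fix x
    show "((\<lambda>x. - exp (- c * x) / c) has_real_derivative exp (- c * x)) (at x)"
      using c by (auto intro!: derivative_eq_intros simp: field_simps)
    show "isCont (\<lambda>x. exp (- c * x)) x" by (intro continuous_intros)
  next
    show "AE x in lborel. ereal 0 < ereal x \<longrightarrow> ereal x < \<infinity> \<longrightarrow> 0 \<le> exp (- c * x)"
      by auto
    have "((\<lambda>x. - exp (- c * x) / c) \<longlongrightarrow> - exp (- c * 0) / c) (at_right 0)"
      using c by (intro tendsto_intros) auto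
    then show "(((\<lambda>x. - exp (- c * x) / c) \<circ> real_of_ereal) \<longlongrightarrow> - 1 / c) (at_right (ereal 0))"
      by (simp add: ereal_tendsto_simps)
    have "((\<lambda>x. - exp (- c * x) / c) \<longlongrightarrow> - 0 / c) at_top"
      using c by (intro tendsto_intros exp_neg_tendsto c) auto
    then show "(((\<lambda>x. - exp (- c * x) / c) \<circ> real_of_ereal) \<longlongrightarrow> 0) (at_left \<infinity>)"
      by (simp add: ereal_tendsto_simps)
  qed
  then show ?thesis by simp
qed

lemma aa_nonneg: "N < M \<Longrightarrow> (real M - real N - 1) / 2 \<ge> 0"
  by simp

lemma norm_wgt:
  assumes "x > 0"
  shows "norm (wgt M N t \<sigma> x) = exp (- real M * x / 2) * x powr ((real M - real N - 1) / 2) * norm (br \<sigma> (t - complex_of_real x))"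
  unfolding wgt_def by (simp add: norm_mult)

lemma F_int:
  assumes "M > 0" "N < M"
  shows "set_integrable lborel {0<..} (\<lambda>x. poly p (complex_of_real x) * wgt M N t \<sigma> x)"
proof -
  define a where "a = (real M - real N - 1) / 2"
  have a0: "a \<ge> 0" using assms by (simp add: a_def)
  obtain C where C: "C \<ge> 0" "\<forall>x>0. norm (poly p (complex_of_real x)) * (exp (- real M * x / 2) * x powr a)
           \<le> C * exp (- (real M / 4) * x)"
    using Fbound[OF assms(1) a0, of p] by blast
  define r where "r = Re t"
  define c where "c = real M / 4"
  have c0: "c > 0" using assms by (simp add: c_def)
  define G where "G = (\<lambda>x. C * (indicator {r - 1<..<r} x * (1 / sqrt (r - x))
      + indicator {r<..<r + 1} x * (1 / sqrt (x - r)) + exp (- c * x)))"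
  have iG: "set_integrable lborel {0<..} G"
  proof -
    have i1: "integrable lborel (\<lambda>x. indicator {r - 1<..<r} x * (1 / sqrt (r - x)))"
      using int_sing_left[of r] by (simp add: set_integrable_def)
    have i2: "integrable lborel (\<lambda>x. indicator {r<..<r + 1} x * (1 / sqrt (x - r)))"
      using int_sing_right[of r] by (simp add: set_integrable_def)
    have s1: "set_integrable lborel {0<..} (\<lambda>x. indicator {r - 1<..<r} x * (1 / sqrt (r - x)))"
      unfolding set_integrable_def by (rule integrable_mult_indicator) (use i1 in auto)
    have s2: "set_integrable lborel {0<..} (\<lambda>x. indicator {r<..<r + 1} x * (1 / sqrt (x - r)))"
      unfolding set_integrable_def by (rule integrable_mult_indicator) (use i2 in auto)
    have s3: "set_integrable lborel {0<..} (\<lambda>x. exp (- c * x))" by (rule int_exp[OF c0])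
    show ?thesis unfolding G_def
      by (intro set_integrable_mult_right set_integral_add(1) s1 s2 s3)
  qed
  show ?thesis
  proof (rule set_integrable_bound[OF iG])
    show "set_borel_measurable lborel {0<..} (\<lambda>x. poly p (complex_of_real x) * wgt M N t \<sigma> x)"
      unfolding set_borel_measurable_def using Wp_meas[of p M N t \<sigma>] by measurable
    show "AE x in lborel. x \<in> {0<..} \<longrightarrow> norm (poly p (complex_of_real x) * wgt M N t \<sigma> x) \<le> norm (G x)"
      using AE_lborel_singleton[of r]
    proof eventually_elim
      case (elim x)
      show ?case
      proof
        assume "x \<in> {0<..}"
        then have x0: "x > 0" by simp
        have xr: "x \<noteq> r" using elim by simp
        have tx: "t - complex_of_real x \<noteq> 0" using xr by (auto simp: r_def complex_eq_iff)
        have d: "\<bar>r - x\<bar> > 0" using xr by simp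
        have nle: "\<bar>r - x\<bar> \<le> norm (t - complex_of_real x)"
          using abs_Re_le_cmod[of "t - complex_of_real x"] by (simp add: r_def)
        have ec: "exp (- c * x) \<le> 1" using c0 x0 by simp
        have "norm (poly p (complex_of_real x) * wgt M N t \<sigma> x) =
            norm (poly p (complex_of_real x)) * (exp (- real M * x / 2) * x powr a) * (1 / sqrt (norm (t - complex_of_real x)))"
          using x0 by (simp add: norm_mult norm_wgt br_norm[OF tx] a_def)
        also have "\<dots> \<le> C * exp (- c * x) * (1 / sqrt \<bar>r - x\<bar>)"
        proof (rule mult_mono)
          show "norm (poly p (complex_of_real x)) * (exp (- real M * x / 2) * x powr a) \<le> C * exp (- c * x)"
            using C(2) x0 by (simp add: c_def)
          show "1 / sqrt (norm (t - complex_of_real x)) \<le> 1 / sqrt \<bar>r - x\<bar>"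
            using d nle by (intro divide_left_mono real_sqrt_le_mono mult_pos_pos) auto
        qed (use C in auto)
        also have "\<dots> \<le> G x"
        proof (cases "\<bar>r - x\<bar> < 1")
          case True
          have "C * exp (- c * x) * (1 / sqrt \<bar>r - x\<bar>) = (C * (1 / sqrt \<bar>r - x\<bar>)) * exp (- c * x)"
            by simp
          also have "\<dots> \<le> (C * (1 / sqrt \<bar>r - x\<bar>)) * 1"
            by (rule mult_left_mono[OF ec]) (use C in simp)
          also have "\<dots> = C * (1 / sqrt \<bar>r - x\<bar>)" by simp
          also have "\<dots> \<le> G x"
          proof (cases "x < r")
            case True
            then have "x \<in> {r - 1<..<r}" "x \<notin> {r<..<r + 1}" using \<open>\<bar>r - x\<bar> < 1\<close> by auto
            then show ?thesis using True C by (simp add: G_def ring_distribs)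
          next
            case False
            then have "x \<notin> {r - 1<..<r}" "x \<in> {r<..<r + 1}" using \<open>\<bar>r - x\<bar> < 1\<close> xr by auto
            then show ?thesis using False C by (simp add: G_def ring_distribs)
          qed
          finally show ?thesis .
        next
          case False
          have "1 / sqrt \<bar>r - x\<bar> \<le> 1" using False by simp
          then have "C * exp (- c * x) * (1 / sqrt \<bar>r - x\<bar>) \<le> C * exp (- c * x)"
            by (rule mult_left_le) (use C in simp)
          also have "\<dots> \<le> G x" unfolding G_def using C
            by (intro mult_left_mono) (auto simp: indicator_def)
          finally show ?thesis .
        qed
        also have "\<dots> \<le> norm (G x)" by simp
        finally show "norm (poly p (complex_of_real x) * wgt M N t \<sigma> x) \<le> norm (G x)" .
      qed
    qed
  qed
qed

lemma FTC1:
  fixes F f :: "real \<Rightarrow> complex" and a b :: ereal and c :: real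
  assumes ab: "a < b"
    and deriv: "\<And>x. a < ereal x \<Longrightarrow> ereal x < b \<Longrightarrow> x \<noteq> c \<Longrightarrow> (F has_vector_derivative f x) (at x)"
    and cont: "\<And>x. a < ereal x \<Longrightarrow> ereal x < b \<Longrightarrow> x \<noteq> c \<Longrightarrow> isCont f x"
    and Fc: "a < ereal c \<Longrightarrow> ereal c < b \<Longrightarrow> isCont F c"
    and int: "set_integrable lborel (einterval a b) f"
    and A: "((F \<circ> real_of_ereal) \<longlongrightarrow> A) (at_right a)"
    and B: "((F \<circ> real_of_ereal) \<longlongrightarrow> B) (at_left b)"
  shows "(LBINT x=a..b. f x) = B - A"
proof (cases "a < ereal c \<and> ereal c < b")
  case False
  show ?thesis
  proof (rule interval_integral_FTC_integrable[OF ab _ _ int A B])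
    fix x assume x: "a < ereal x" "ereal x < b"
    then have "x \<noteq> c" using False by auto
    then show "(F has_vector_derivative f x) (at x)" "isCont f x" using x deriv cont by auto
  qed
next
  case True
  have Fcl: "(F \<longlongrightarrow> F c) (at c)" using Fc True by (simp add: isCont_def)
  then have Fl: "(F \<longlongrightarrow> F c) (at_left c)" and Fr: "(F \<longlongrightarrow> F c) (at_right c)"
    using filterlim_at_split by blast+
  have sub1: "einterval a (ereal c) \<subseteq> einterval a b"
  proof
    fix x assume "x \<in> einterval a (ereal c)"
    then have "a < ereal x" "ereal x < ereal c" by (auto simp: einterval_def)
    moreover have "ereal x < b" using \<open>ereal x < ereal c\<close> True by (meson less_trans)
    ultimately show "x \<in> einterval a b" by (simp add: einterval_def)
  qed
  have sub2: "einterval (ereal c) b \<subseteq> einterval a b"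
  proof
    fix x assume "x \<in> einterval (ereal c) b"
    then have "ereal c < ereal x" "ereal x < b" by (auto simp: einterval_def)
    moreover have "a < ereal x" using \<open>ereal c < ereal x\<close> True by (meson less_trans)
    ultimately show "x \<in> einterval a b" by (simp add: einterval_def)
  qed
  have int1: "set_integrable lborel (einterval a (ereal c)) f"
    by (rule set_integrable_subset[OF int _ sub1]) simp
  have int2: "set_integrable lborel (einterval (ereal c) b) f"
    by (rule set_integrable_subset[OF int _ sub2]) simp
  have I1: "(LBINT x=a..ereal c. f x) = F c - A"
  proof (rule interval_integral_FTC_integrable[OF _ _ _ int1 A])
    show "a < ereal c" using True by simp
    fix x assume x: "a < ereal x" "ereal x < ereal c"
    then have "x \<noteq> c" by auto
    moreover have "ereal x < b" using x True by (meson less_trans)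
    ultimately show "(F has_vector_derivative f x) (at x)" "isCont f x" using x deriv cont by auto
  next
    show "((F \<circ> real_of_ereal) \<longlongrightarrow> F c) (at_left (ereal c))"
      using Fl by (simp add: ereal_tendsto_simps)
  qed
  have I2: "(LBINT x=ereal c..b. f x) = B - F c"
  proof (rule interval_integral_FTC_integrable[OF _ _ _ int2 _ B])
    show "ereal c < b" using True by simp
    fix x assume x: "ereal c < ereal x" "ereal x < b"
    then have "x \<noteq> c" by auto
    moreover have "a < ereal x" using x True by (meson less_trans)
    ultimately show "(F has_vector_derivative f x) (at x)" "isCont f x" using x deriv cont by auto
  next
    show "((F \<circ> real_of_ereal) \<longlongrightarrow> F c) (at_right (ereal c))"
      using Fr by (simp add: ereal_tendsto_simps)
  qed
  have "(LBINT x=a..ereal c. f x) + (LBINT x=ereal c..b. f x) = (LBINT x=a..b. f x)"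
  proof (rule interval_integral_sum)
    have "min a (min (ereal c) b) = a" "max a (max (ereal c) b) = b" using True by auto
    then show "interval_lebesgue_integrable lborel (min a (min (ereal c) b)) (max a (max (ereal c) b)) f"
      using int ab by (simp add: interval_lebesgue_integrable_def less_imp_le)
  qed
  then show ?thesis using I1 I2 by simp
qed

lemma u_bound:
  assumes "M > 0" "N < M"
  shows "\<exists>C\<ge>0. \<forall>s>0. norm (uu M N t \<sigma> q s) \<le> C * exp (- (real M / 4) * s) * s * sqrt (norm (t - complex_of_real s))"
proof -
  define a where "a = (real M - real N - 1) / 2"
  have a0: "a \<ge> 0" using assms by (simp add: a_def)
  obtain C where C: "C \<ge> 0" "\<forall>x>0. norm (poly q (complex_of_real x)) * (exp (- real M * x / 2) * x powr a)
           \<le> C * exp (- (real M / 4) * x)"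
    using Fbound[OF assms(1) a0, of q] by blast
  show ?thesis
  proof (intro exI[of _ C] conjI allI impI)
    show "C \<ge> 0" by fact
    fix s :: real assume s: "s > 0"
    have "norm (uu M N t \<sigma> q s) = norm (poly q (complex_of_real s)) * (exp (- real M * s / 2) * s powr a)
        * s * norm ((t - complex_of_real s) * br \<sigma> (t - complex_of_real s))"
      using s unfolding uu_def wgt_def a_def by (simp add: norm_mult)
    also have "\<dots> = norm (poly q (complex_of_real s)) * (exp (- real M * s / 2) * s powr a)
        * s * sqrt (norm (t - complex_of_real s))" by (simp only: K_norm)
    also have "\<dots> \<le> C * exp (- (real M / 4) * s) * s * sqrt (norm (t - complex_of_real s))"
      using C s by (intro mult_right_mono) auto
    finally show "norm (uu M N t \<sigma> q s) \<le> C * exp (- (real M / 4) * s) * s * sqrt (norm (t - complex_of_real s))" .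
  qed
qed

lemma u_lim0:
  assumes "M > 0" "N < M"
  shows "(uu M N t \<sigma> q \<longlongrightarrow> 0) (at_right 0)"
proof -
  obtain C where C: "C \<ge> 0" "\<forall>s>0. norm (uu M N t \<sigma> q s) \<le> C * exp (- (real M / 4) * s) * s * sqrt (norm (t - complex_of_real s))"
    using u_bound[OF assms] by blast
  show ?thesis
  proof (rule Lim_null_comparison)
    show "\<forall>\<^sub>F s in at_right 0. norm (uu M N t \<sigma> q s) \<le> C * exp (- (real M / 4) * s) * s * sqrt (norm (t - complex_of_real s))"
      using eventually_at_right_less[of 0] by (rule eventually_mono) (use C(2) in auto)
    have "((\<lambda>s. C * exp (- (real M / 4) * s) * s * sqrt (norm (t - complex_of_real s))) \<longlongrightarrow>
        C * exp (- (real M / 4) * 0) * 0 * sqrt (norm (t - complex_of_real 0))) (at_right 0)"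
      by (intro tendsto_intros)
    then show "((\<lambda>s. C * exp (- (real M / 4) * s) * s * sqrt (norm (t - complex_of_real s))) \<longlongrightarrow> 0) (at_right 0)"
      by simp
  qed
qed

lemma u_limtop:
  assumes "M > 0" "N < M"
  shows "(uu M N t \<sigma> q \<longlongrightarrow> 0) at_top"
proof -
  obtain C where C: "C \<ge> 0" "\<forall>s>0. norm (uu M N t \<sigma> q s) \<le> C * exp (- (real M / 4) * s) * s * sqrt (norm (t - complex_of_real s))"
    using u_bound[OF assms] by blast
  obtain C2 where C2: "\<forall>x\<ge>0. (1 + x :: real) ^ 2 \<le> C2 * exp (real M / 8 * x)"
    using exp_dom[of "real M / 8" 2] assms by auto
  define D where "D = C * (1 + norm t) * C2"
  show ?thesis
  proof (rule Lim_null_comparison)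
    show "\<forall>\<^sub>F s in at_top. norm (uu M N t \<sigma> q s) \<le> D * exp (- (real M / 8) * s)"
    proof (rule eventually_at_top_linorderI[of 1])
      fix s :: real assume s: "s \<ge> 1"
      have sq: "sqrt (norm (t - complex_of_real s)) \<le> (1 + norm t) * (1 + s)"
      proof -
        have "norm (t - complex_of_real s) \<le> norm t + norm (complex_of_real s)"
          by (rule norm_triangle_ineq4)
        then have n1: "norm (t - complex_of_real s) \<le> norm t + s" using s by simp
        have "norm (t - complex_of_real s) \<le> (1 + norm (t - complex_of_real s))^2"
          by (simp add: power2_eq_square algebra_simps)
        then have "sqrt (norm (t - complex_of_real s)) \<le> 1 + norm (t - complex_of_real s)"
          by (intro real_le_lsqrt) auto
        moreover have "0 \<le> norm t * s" using s by simp
        ultimately show ?thesis using n1 by (simp add: algebra_simps)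
      qed
      have "norm (uu M N t \<sigma> q s) \<le> C * exp (- (real M / 4) * s) * s * sqrt (norm (t - complex_of_real s))"
        using C(2) s by auto
      also have "\<dots> \<le> C * exp (- (real M / 4) * s) * (1 + s) * ((1 + norm t) * (1 + s))"
        using C s sq by (intro mult_mono mult_left_mono) auto
      also have "\<dots> = C * (1 + norm t) * exp (- (real M / 4) * s) * (1 + s) ^ 2"
        by (simp add: power2_eq_square algebra_simps)
      also have "\<dots> \<le> C * (1 + norm t) * exp (- (real M / 4) * s) * (C2 * exp (real M / 8 * s))"
        using C C2 s by (intro mult_left_mono) auto
      also have "\<dots> = D * (exp (- (real M / 4) * s) * exp (real M / 8 * s))"
        by (simp add: D_def algebra_simps)
      also have "exp (- (real M / 4) * s) * exp (real M / 8 * s) = exp (- (real M / 8) * s)"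
        by (simp only: exp_add[symmetric]) (rule arg_cong[where f=exp]; simp add: field_simps)
      finally show "norm (uu M N t \<sigma> q s) \<le> D * exp (- (real M / 8) * s)" .
    qed
    have "((\<lambda>s. D * exp (- (real M / 8) * s)) \<longlongrightarrow> D * 0) at_top"
      using assms by (intro tendsto_intros exp_neg_tendsto) auto
    then show "((\<lambda>s. D * exp (- (real M / 8) * s)) \<longlongrightarrow> 0) at_top" by simp
  qed
qed

lemma f_cont:
  assumes "x > 0" "t - complex_of_real x \<noteq> 0"
  shows "isCont (\<lambda>x. poly p (complex_of_real x) * wgt M N t \<sigma> x) x"
  using wgt_isCont[OF assms] by (intro continuous_intros) auto

lemma ind_mult:
  fixes f :: "real \<Rightarrow> complex"
  shows "(\<integral>x. indicator A x *\<^sub>R (c * f x) \<partial>M) = c * (\<integral>x. indicator A x *\<^sub>R f x \<partial>M)"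
proof -
  have "(\<lambda>x. indicator A x *\<^sub>R (c * f x)) = (\<lambda>x. c * (indicator A x *\<^sub>R f x))"
    by (auto simp: scaleR_conv_of_real)
  then show ?thesis by (simp only: integral_mult_right_zero)
qed

lemma inner:
  assumes M: "M > 0" "N < M" and y: "y > 0"
  shows "(LINT x:{0<..}|lborel. complex_of_real (sgn (x - y) / 2) *
            (poly (Dx M N t q) (complex_of_real x) * wgt M N t \<sigma> x)) = - uu M N t \<sigma> q y"
proof -
  define f where "f = (\<lambda>x. poly (Dx M N t q) (complex_of_real x) * wgt M N t \<sigma> x)"
  define u where "u = uu M N t \<sigma> q"
  have fint: "set_integrable lborel {0<..} f" unfolding f_def by (rule F_int[OF M])
  have int1: "set_integrable lborel {0<..<y} f"
    by (rule set_integrable_subset[OF fint]) auto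
  have int2: "set_integrable lborel {y<..} f"
    by (rule set_integrable_subset[OF fint]) (use y in auto)
  have dv: "(u has_vector_derivative f x) (at x)" if "x > 0" "x \<noteq> Re t" for x
  proof -
    have "t - complex_of_real x \<noteq> 0" using that by (auto simp: complex_eq_iff)
    then show ?thesis unfolding u_def f_def using uu_deriv that by blast
  qed
  have fc: "isCont f x" if "x > 0" "x \<noteq> Re t" for x
  proof -
    have "t - complex_of_real x \<noteq> 0" using that by (auto simp: complex_eq_iff)
    then show ?thesis unfolding f_def using f_cont that by blast
  qed
  have uc: "isCont u x" if "x > 0" for x unfolding u_def using uu_isCont that by blast
  have uy: "(u \<longlongrightarrow> u y) (at_left y)" "(u \<longlongrightarrow> u y) (at_right y)"
    using uc[OF y] filterlim_at_split unfolding isCont_def by blast+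
  have I1: "(LBINT x=ereal 0..ereal y. f x) = u y - 0"
  proof (rule FTC1[where c="Re t"])
    show "ereal 0 < ereal y" using y by simp
    show "set_integrable lborel (einterval (ereal 0) (ereal y)) f" using int1 by simp
    show "((u \<circ> real_of_ereal) \<longlongrightarrow> 0) (at_right (ereal 0))"
      using u_lim0[OF M] unfolding u_def by (simp add: ereal_tendsto_simps)
    show "((u \<circ> real_of_ereal) \<longlongrightarrow> u y) (at_left (ereal y))"
      using uy by (simp add: ereal_tendsto_simps)
  qed (auto intro!: dv fc uc)
  have I2: "(LBINT x=ereal y..\<infinity>. f x) = 0 - u y"
  proof (rule FTC1[where c="Re t"])
    show "ereal y < \<infinity>" by simp
    show "set_integrable lborel (einterval (ereal y) \<infinity>) f" using int2 by simp
    show "((u \<circ> real_of_ereal) \<longlongrightarrow> u y) (at_right (ereal y))"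
      using uy by (simp add: ereal_tendsto_simps)
    show "((u \<circ> real_of_ereal) \<longlongrightarrow> 0) (at_left \<infinity>)"
      using u_limtop[OF M] unfolding u_def by (simp add: ereal_tendsto_simps)
  qed (use y in \<open>auto intro!: dv fc uc\<close>)
  have L1: "(LINT x:{0<..<y}|lborel. f x) = u y"
    using I1 y by (simp add: interval_integral_Ioo)
  have L2: "(LINT x:{y<..}|lborel. f x) = - u y"
    using I2 by (simp add: interval_integral_Ioi)
  have i1: "integrable lborel (\<lambda>x. indicator {0<..<y} x *\<^sub>R (complex_of_real (-1/2) * f x))"
    using set_integrable_mult_right[OF int1, of "complex_of_real (-1/2)"] by (simp add: set_integrable_def)
  have i2: "integrable lborel (\<lambda>x. indicator {y<..} x *\<^sub>R (complex_of_real (1/2) * f x))"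
    using set_integrable_mult_right[OF int2, of "complex_of_real (1/2)"] by (simp add: set_integrable_def)
  have "(LINT x:{0<..}|lborel. complex_of_real (sgn (x - y) / 2) * f x)
      = (\<integral>x. indicator {0<..<y} x *\<^sub>R (complex_of_real (-1/2) * f x)
          + indicator {y<..} x *\<^sub>R (complex_of_real (1/2) * f x) \<partial>lborel)"
    unfolding set_lebesgue_integral_def
  proof (rule Bochner_Integration.integral_cong[OF refl])
    fix x
    show "indicator {0<..} x *\<^sub>R (complex_of_real (sgn (x - y) / 2) * f x) =
        indicator {0<..<y} x *\<^sub>R (complex_of_real (-1/2) * f x) + indicator {y<..} x *\<^sub>R (complex_of_real (1/2) * f x)"
      using y by (cases "x < y"; cases "x = y"; cases "x > 0") (auto simp: indicator_def sgn_if)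
  qed
  also have "\<dots> = (\<integral>x. indicator {0<..<y} x *\<^sub>R (complex_of_real (-1/2) * f x) \<partial>lborel)
      + (\<integral>x. indicator {y<..} x *\<^sub>R (complex_of_real (1/2) * f x) \<partial>lborel)"
    by (rule Bochner_Integration.integral_add[OF i1 i2])
  also have "\<dots> = complex_of_real (-1/2) * (LINT x:{0<..<y}|lborel. f x) + complex_of_real (1/2) * (LINT x:{y<..}|lborel. f x)"
    unfolding ind_mult set_lebesgue_integral_def ..
  also have "\<dots> = - u y" by (simp add: L1 L2)
  finally show ?thesis unfolding f_def u_def .
qed

definition WW :: "nat \<Rightarrow> nat \<Rightarrow> complex \<Rightarrow> bool \<Rightarrow> complex poly \<Rightarrow> real \<Rightarrow> complex" where
  "WW M N t \<sigma> p x = indicator {0<..} x *\<^sub>R (poly p (complex_of_real x) * wgt M N t \<sigma> x)"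

lemma WW_meas[measurable]: "WW M N t \<sigma> p \<in> borel_measurable lborel"
proof -
  have "(\<lambda>x. poly p (complex_of_real x) * wgt M N t \<sigma> x) \<in> borel_measurable lborel"
    using Wp_meas by simp
  then show ?thesis unfolding WW_def[abs_def] by measurable
qed

lemma WW_int:
  assumes "M > 0" "N < M"
  shows "integrable lborel (WW M N t \<sigma> p)"
  using F_int[OF assms, of p t \<sigma>] unfolding set_integrable_def WW_def[abs_def] .

lemma skew_iter:
  "skew M N t \<sigma> f g = (\<integral>y. (\<integral>x. complex_of_real (sgn (x - y) / 2) * WW M N t \<sigma> f x * WW M N t \<sigma> g y \<partial>lborel) \<partial>lborel)"
  unfolding skew_def set_lebesgue_integral_def
proof (rule Bochner_Integration.integral_cong[OF refl])
  fix y
  have "indicator {0<..} y *\<^sub>R (\<integral>x. indicator {0<..} x *\<^sub>R (complex_of_real (sgn (x - y) / 2) * poly f (complex_of_real x) *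
          poly g (complex_of_real y) * wgt M N t \<sigma> x * wgt M N t \<sigma> y) \<partial>lborel)
     = (\<integral>x. indicator {0<..} y *\<^sub>R (indicator {0<..} x *\<^sub>R (complex_of_real (sgn (x - y) / 2) * poly f (complex_of_real x) *
          poly g (complex_of_real y) * wgt M N t \<sigma> x * wgt M N t \<sigma> y)) \<partial>lborel)"
    by (rule integral_scaleR_right[symmetric])
  also have "\<dots> = (\<integral>x. complex_of_real (sgn (x - y) / 2) * WW M N t \<sigma> f x * WW M N t \<sigma> g y \<partial>lborel)"
    by (rule Bochner_Integration.integral_cong[OF refl]) (auto simp: WW_def indicator_def)
  finally show "indicator {0<..} y *\<^sub>R (\<integral>x. indicator {0<..} x *\<^sub>R (complex_of_real (sgn (x - y) / 2) * poly f (complex_of_real x) *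
          poly g (complex_of_real y) * wgt M N t \<sigma> x * wgt M N t \<sigma> y) \<partial>lborel)
     = (\<integral>x. complex_of_real (sgn (x - y) / 2) * WW M N t \<sigma> f x * WW M N t \<sigma> g y \<partial>lborel)" .
qed

lemma H_int:
  assumes "M > 0" "N < M"
  shows "integrable (lborel \<Otimes>\<^sub>M lborel)
     (\<lambda>(x, y). complex_of_real (sgn (x - y) / 2) * WW M N t \<sigma> f x * WW M N t \<sigma> g y)"
proof (rule Bochner_Integration.integrable_bound)
  show "integrable (lborel \<Otimes>\<^sub>M lborel) (\<lambda>(x, y). norm (WW M N t \<sigma> f x) * norm (WW M N t \<sigma> g y))"
  proof (rule lborel_pair.Fubini_integrable)
    show "(\<lambda>(x, y). norm (WW M N t \<sigma> f x) * norm (WW M N t \<sigma> g y)) \<in> borel_measurable (lborel \<Otimes>\<^sub>M lborel)"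
      by measurable
    have "integrable lborel (\<lambda>x. norm (WW M N t \<sigma> f x) * (\<integral>y. norm (WW M N t \<sigma> g y) \<partial>lborel))"
      using WW_int[OF assms, of t \<sigma> f] by (intro integrable_mult_left integrable_norm)
    then show "integrable lborel (\<lambda>x. \<integral>y. norm (case (x, y) of (x, y) \<Rightarrow> norm (WW M N t \<sigma> f x) * norm (WW M N t \<sigma> g y)) \<partial>lborel)"
      by simp
    show "AE x in lborel. integrable lborel (\<lambda>y. case (x, y) of (x, y) \<Rightarrow> norm (WW M N t \<sigma> f x) * norm (WW M N t \<sigma> g y))"
      using WW_int[OF assms, of t \<sigma> g] by (auto intro!: integrable_mult_right integrable_norm)
  qed
  show "(\<lambda>(x, y). complex_of_real (sgn (x - y) / 2) * WW M N t \<sigma> f x * WW M N t \<sigma> g y) \<in> borel_measurable (lborel \<Otimes>\<^sub>M lborel)"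
    by measurable
  show "AE z in lborel \<Otimes>\<^sub>M lborel. norm (case z of (x, y) \<Rightarrow> complex_of_real (sgn (x - y) / 2) * WW M N t \<sigma> f x * WW M N t \<sigma> g y)
      \<le> norm (case z of (x, y) \<Rightarrow> norm (WW M N t \<sigma> f x) * norm (WW M N t \<sigma> g y))"
  proof (rule AE_I2)
    fix z :: "real \<times> real"
    obtain x y where z: "z = (x, y)" by (cases z)
    have "\<bar>sgn (x - y) / 2\<bar> \<le> (1::real)" by (simp add: sgn_if)
    then have "norm (complex_of_real (sgn (x - y) / 2) * WW M N t \<sigma> f x * WW M N t \<sigma> g y)
        \<le> 1 * norm (WW M N t \<sigma> f x) * norm (WW M N t \<sigma> g y)"
      by (simp add: norm_mult mult_right_mono mult.assoc)
    then show "norm (case z of (x, y) \<Rightarrow> complex_of_real (sgn (x - y) / 2) * WW M N t \<sigma> f x * WW M N t \<sigma> g y)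
      \<le> norm (case z of (x, y) \<Rightarrow> norm (WW M N t \<sigma> f x) * norm (WW M N t \<sigma> g y))"
      by (simp add: z)
  qed
qed

lemma skew_prod:
  assumes "M > 0" "N < M"
  shows "skew M N t \<sigma> f g = integral\<^sup>L (lborel \<Otimes>\<^sub>M lborel)
     (\<lambda>(x, y). complex_of_real (sgn (x - y) / 2) * WW M N t \<sigma> f x * WW M N t \<sigma> g y)"
  unfolding skew_iter
  using lborel_pair.integral_snd[OF H_int[OF assms, of t \<sigma> f g]] by simp

lemma skew_antisym:
  assumes "M > 0" "N < M"
  shows "skew M N t \<sigma> g f = - skew M N t \<sigma> f g"
proof -
  let ?h = "\<lambda>(x, y). complex_of_real (sgn (x - y) / 2) * WW M N t \<sigma> g x * WW M N t \<sigma> f y"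
  have hm: "?h \<in> borel_measurable (lborel \<Otimes>\<^sub>M lborel)" by measurable
  have "skew M N t \<sigma> g f = integral\<^sup>L (lborel \<Otimes>\<^sub>M lborel) ?h" by (rule skew_prod[OF assms])
  also have "\<dots> = (\<integral>(x, y). ?h (y, x) \<partial>(lborel \<Otimes>\<^sub>M lborel))"
    by (rule lborel_pair.integral_product_swap[OF hm, symmetric])
  also have "\<dots> = (\<integral>z. - (case z of (x, y) \<Rightarrow> complex_of_real (sgn (x - y) / 2) * WW M N t \<sigma> f x * WW M N t \<sigma> g y) \<partial>(lborel \<Otimes>\<^sub>M lborel))"
  proof (rule Bochner_Integration.integral_cong[OF refl])
    fix z :: "real \<times> real"
    obtain x y where z: "z = (x, y)" by (cases z)
    have "sgn (y - x) = - sgn (x - y)" by (simp add: sgn_if)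
    then show "(case z of (x, y) \<Rightarrow> ?h (y, x)) = - (case z of (x, y) \<Rightarrow> complex_of_real (sgn (x - y) / 2) * WW M N t \<sigma> f x * WW M N t \<sigma> g y)"
      by (simp add: z)
  qed
  also have "\<dots> = - skew M N t \<sigma> f g"
    unfolding skew_prod[OF assms] by (rule Bochner_Integration.integral_minus)
  finally show ?thesis .
qed

lemma WW_lin: "WW M N t \<sigma> (smult a p + smult b q) x = a * WW M N t \<sigma> p x + b * WW M N t \<sigma> q x"
  by (simp add: WW_def indicator_def algebra_simps)

lemma skew_lin:
  assumes "M > 0" "N < M"
  shows "skew M N t \<sigma> (smult a p + smult b q) g = a * skew M N t \<sigma> p g + b * skew M N t \<sigma> q g"
proof -
  let ?H = "\<lambda>p. \<lambda>(x, y). complex_of_real (sgn (x - y) / 2) * WW M N t \<sigma> p x * WW M N t \<sigma> g y"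
  have "skew M N t \<sigma> (smult a p + smult b q) g = integral\<^sup>L (lborel \<Otimes>\<^sub>M lborel) (?H (smult a p + smult b q))"
    by (rule skew_prod[OF assms])
  also have "\<dots> = integral\<^sup>L (lborel \<Otimes>\<^sub>M lborel) (\<lambda>z. a * ?H p z + b * ?H q z)"
    by (rule Bochner_Integration.integral_cong[OF refl]) (auto simp: WW_lin algebra_simps)
  also have "\<dots> = integral\<^sup>L (lborel \<Otimes>\<^sub>M lborel) (\<lambda>z. a * ?H p z) + integral\<^sup>L (lborel \<Otimes>\<^sub>M lborel) (\<lambda>z. b * ?H q z)"
    by (rule Bochner_Integration.integral_add; rule integrable_mult_right; rule H_int[OF assms])
  also have "\<dots> = a * skew M N t \<sigma> p g + b * skew M N t \<sigma> q g"
    by (simp add: skew_prod[OF assms])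
  finally show ?thesis .
qed

lemma wsq:
  assumes "N < M" "y > 0" "t - complex_of_real y \<noteq> 0"
  shows "complex_of_real y * (t - complex_of_real y) * (wgt M N t \<sigma> y)^2 = complex_of_real (w0 M N y)"
proof -
  define E where "E = exp (- real M * y / 2) * y powr ((real M - real N - 1) / 2)"
  have w: "wgt M N t \<sigma> y = complex_of_real E * br \<sigma> (t - complex_of_real y)" by (simp add: wgt_def E_def)
  have b: "(t - complex_of_real y) * (br \<sigma> (t - complex_of_real y))^2 = 1" by (rule br_sq[OF assms(3)])
  have e2: "exp (- real M * y / 2) ^ 2 = exp (- real M * y)"
    by (simp add: power2_eq_square exp_add[symmetric])
  have r: "real M - real N - 1 = real (M - N - 1)" using assms(1) by (simp add: of_nat_diff)
  have p2: "(y powr ((real M - real N - 1) / 2)) ^ 2 = y ^ (M - N - 1)"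
  proof -
    have e: "of_nat 2 * ((real M - real N - 1) / 2) = real (M - N - 1)" using r by simp
    have "(y powr ((real M - real N - 1) / 2)) ^ 2 = y powr (of_nat 2 * ((real M - real N - 1) / 2))"
      using assms(2) by (intro powr_power) simp
    also have "\<dots> = y powr (real (M - N - 1))" by (simp only: e)
    also have "\<dots> = y ^ (M - N - 1)" using assms(2) by (rule powr_realpow)
    finally show ?thesis .
  qed
  have yE: "y * E ^ 2 = w0 M N y"
  proof -
    have "y * E ^ 2 = y * y ^ (M - N - 1) * exp (- real M * y)"
      unfolding E_def power_mult_distrib e2 p2 by simp
    also have "y * y ^ (M - N - 1) = y ^ (M - N)"
    proof -
      obtain k where k: "M - N = Suc k" using assms(1) by (cases "M - N") auto
      then show ?thesis by simp
    qed
    finally show ?thesis by (simp add: w0_def)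
  qed
  have "complex_of_real y * (t - complex_of_real y) * (wgt M N t \<sigma> y)^2
      = complex_of_real (y * E ^ 2) * ((t - complex_of_real y) * (br \<sigma> (t - complex_of_real y))^2)"
    unfolding w by (simp add: power_mult_distrib mult_ac)
  also have "\<dots> = complex_of_real (w0 M N y)" using b yE by simp
  finally show ?thesis .
qed

lemma uu_meas[measurable]: "uu M N t \<sigma> q \<in> borel_measurable lborel"
proof -
  have "(\<lambda>x. poly q (complex_of_real x)) \<in> borel_measurable borel"
    by (intro borel_measurable_continuous_onI continuous_intros)
  moreover have "wgt M N t \<sigma> \<in> borel_measurable borel" by (rule wgt_meas)
  ultimately show ?thesis unfolding uu_def[abs_def] by measurable
qed

lemma w0_meas[measurable]: "w0 M N \<in> borel_measurable lborel"
  unfolding w0_def[abs_def] by measurable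

lemma skew_D:
  assumes M: "M > 0" "N < M"
  shows "skew M N t \<sigma> (Dx M N t q) g =
    - (LINT x:{0<..}|lborel. poly q (complex_of_real x) * poly g (complex_of_real x) * complex_of_real (w0 M N x))"
proof -
  have "skew M N t \<sigma> (Dx M N t q) g =
      (\<integral>y. indicator {0<..} y *\<^sub>R (- (poly g (complex_of_real y) * wgt M N t \<sigma> y * uu M N t \<sigma> q y)) \<partial>lborel)"
    unfolding skew_iter
  proof (rule Bochner_Integration.integral_cong[OF refl])
    fix y :: real
    have "(\<integral>x. complex_of_real (sgn (x - y) / 2) * WW M N t \<sigma> (Dx M N t q) x * WW M N t \<sigma> g y \<partial>lborel)
        = (\<integral>x. complex_of_real (sgn (x - y) / 2) * WW M N t \<sigma> (Dx M N t q) x \<partial>lborel) * WW M N t \<sigma> g y"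
      by (rule integral_mult_left_zero)
    also have "\<dots> = indicator {0<..} y *\<^sub>R (- (poly g (complex_of_real y) * wgt M N t \<sigma> y * uu M N t \<sigma> q y))"
    proof (cases "y > 0")
      case True
      have "(\<integral>x. complex_of_real (sgn (x - y) / 2) * WW M N t \<sigma> (Dx M N t q) x \<partial>lborel)
          = (LINT x:{0<..}|lborel. complex_of_real (sgn (x - y) / 2) *
            (poly (Dx M N t q) (complex_of_real x) * wgt M N t \<sigma> x))"
        unfolding set_lebesgue_integral_def
        by (rule Bochner_Integration.integral_cong[OF refl]) (auto simp: WW_def indicator_def)
      also have "\<dots> = - uu M N t \<sigma> q y" by (rule inner[OF M True])
      finally show ?thesis using True by (simp add: WW_def algebra_simps)
    next
      case False
      then show ?thesis by (simp add: WW_def)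
    qed
    finally show "(\<integral>x. complex_of_real (sgn (x - y) / 2) * WW M N t \<sigma> (Dx M N t q) x * WW M N t \<sigma> g y \<partial>lborel)
       = indicator {0<..} y *\<^sub>R (- (poly g (complex_of_real y) * wgt M N t \<sigma> y * uu M N t \<sigma> q y))" .
  qed
  also have "\<dots> = (\<integral>y. indicator {0<..} y *\<^sub>R (- (poly q (complex_of_real y) * poly g (complex_of_real y) *
       complex_of_real (w0 M N y))) \<partial>lborel)"
  proof (rule integral_cong_AE)
    have mg: "(\<lambda>x. poly g (complex_of_real x)) \<in> borel_measurable lborel"
      "(\<lambda>x. poly q (complex_of_real x)) \<in> borel_measurable lborel"
      by (simp_all add: borel_measurable_continuous_onI continuous_intros)
    have mw: "wgt M N t \<sigma> \<in> borel_measurable lborel" using wgt_meas by simp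
    have mu: "uu M N t \<sigma> q \<in> borel_measurable lborel" by (rule uu_meas)
    have mi: "(indicator {0::real<..} :: real \<Rightarrow> real) \<in> borel_measurable lborel" by (rule borel_measurable_indicator) simp
    have mo: "(\<lambda>y. complex_of_real (w0 M N y)) \<in> borel_measurable lborel"
      using measurable_compose[OF w0_meas borel_measurable_of_real] by (simp add: comp_def)
    show "(\<lambda>y. indicator {0<..} y *\<^sub>R (- (poly g (complex_of_real y) * wgt M N t \<sigma> y * uu M N t \<sigma> q y)))
        \<in> borel_measurable lborel"
      by (intro borel_measurable_scaleR borel_measurable_uminus borel_measurable_times mg mw mu mi)
    show "(\<lambda>y. indicator {0<..} y *\<^sub>R (- (poly q (complex_of_real y) * poly g (complex_of_real y) *
       complex_of_real (w0 M N y)))) \<in> borel_measurable lborel"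
      by (intro borel_measurable_scaleR borel_measurable_uminus borel_measurable_times mg mo mi)
    show "AE y in lborel. indicator {0<..} y *\<^sub>R (- (poly g (complex_of_real y) * wgt M N t \<sigma> y * uu M N t \<sigma> q y)) =
        indicator {0<..} y *\<^sub>R (- (poly q (complex_of_real y) * poly g (complex_of_real y) * complex_of_real (w0 M N y)))"
      using AE_lborel_singleton[of "Re t"]
    proof eventually_elim
      case (elim y)
      show ?case
      proof (cases "y > 0")
        case True
        have ty: "t - complex_of_real y \<noteq> 0" using elim by (auto simp: complex_eq_iff)
        have "poly g (complex_of_real y) * wgt M N t \<sigma> y * uu M N t \<sigma> q y
            = poly q (complex_of_real y) * poly g (complex_of_real y) *
              (complex_of_real y * (t - complex_of_real y) * (wgt M N t \<sigma> y)^2)"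
          by (simp add: uu_def power2_eq_square mult_ac)
        also have "\<dots> = poly q (complex_of_real y) * poly g (complex_of_real y) * complex_of_real (w0 M N y)"
          using wsq[OF M(2) True ty] by simp
        finally show ?thesis by simp
      qed simp
    qed
  qed
  also have "\<dots> = - (LINT x:{0<..}|lborel. poly q (complex_of_real x) * poly g (complex_of_real x) * complex_of_real (w0 M N x))"
    unfolding set_lebesgue_integral_def by (simp only: scaleR_minus_right Bochner_Integration.integral_minus)
  finally show ?thesis .
qed

lemma fmap_eq:
  assumes "M > 0" "degree R \<le> 1" "P = Dx M N t q + R"
  shows "fmap M N t \<sigma> P = R"
  unfolding fmap_def Dop_eq[OF assms(1)]
proof (rule the_equality)
  show "degree R \<le> 1 \<and> (\<exists>q. P = Dx M N t q + R)" using assms by blast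
next
  fix R' assume "degree R' \<le> 1 \<and> (\<exists>q. P = Dx M N t q + R')"
  then obtain q' where q': "degree R' \<le> 1" "P = Dx M N t q' + R'" by blast
  then have "Dx M N t q' + R' = Dx M N t q + R" using assms(3) by simp
  from decomp_unique[OF assms(1) q'(1) assms(2) this] show "R' = R" by simp
qed

lemma fmap_deg:
  assumes "M > 0"
  shows "degree (fmap M N t \<sigma> P) \<le> 1"
proof -
  obtain q R where "degree R \<le> 1" "P = Dx M N t q + R" using decomp_exists[OF assms] by blast
  then show ?thesis using fmap_eq[OF assms] by simp
qed

lemma fmap_lin:
  assumes "M > 0"
  shows "fmap M N t \<sigma> (smult a P1 + smult b P2) = smult a (fmap M N t \<sigma> P1) + smult b (fmap M N t \<sigma> P2)"
proof -
  obtain q1 R1 where 1: "degree R1 \<le> 1" "P1 = Dx M N t q1 + R1" using decomp_exists[OF assms] by blast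
  obtain q2 R2 where 2: "degree R2 \<le> 1" "P2 = Dx M N t q2 + R2" using decomp_exists[OF assms] by blast
  have d: "degree (smult a R1 + smult b R2) \<le> 1"
    using 1 2 by (intro degree_add_le order.trans[OF degree_smult_le]) auto
  have "smult a P1 + smult b P2 = Dx M N t (smult a q1 + smult b q2) + (smult a R1 + smult b R2)"
    using 1 2 by (simp add: Dx_add Dx_smult smult_add_right algebra_simps)
  then have "fmap M N t \<sigma> (smult a P1 + smult b P2) = smult a R1 + smult b R2"
    by (rule fmap_eq[OF assms d])
  moreover have "fmap M N t \<sigma> P1 = R1" "fmap M N t \<sigma> P2 = R2"
    using fmap_eq[OF assms 1(1,2)] fmap_eq[OF assms 2(1,2)] by auto
  ultimately show ?thesis by simp
qed

lemma deg1_eq: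
  fixes p q :: "complex poly"
  assumes "degree p \<le> 1" "degree q \<le> 1" "coeff p 0 = coeff q 0" "coeff p 1 = coeff q 1"
  shows "p = q"
proof (rule poly_eqI)
  fix n
  show "coeff p n = coeff q n"
  proof (cases "n = 0")
    case True
    then show ?thesis using assms(3) by simp
  next
    case n0: False
    show ?thesis
    proof (cases "n = 1")
      case True
      then show ?thesis using assms(4) by simp
    next
      case False
      then have "degree p < n" "degree q < n" using n0 assms(1,2) by linarith+
      then show ?thesis by (simp add: coeff_eq_0)
    qed
  qed
qed

lemma cramer:
  fixes x0 x1 y0 y1 R0 R1 :: complex
  assumes d: "x0 * y1 - x1 * y0 \<noteq> 0"
  shows "(R0 * y1 - R1 * y0) / (x0 * y1 - x1 * y0) * x0 + (x0 * R1 - x1 * R0) / (x0 * y1 - x1 * y0) * y0 = R0"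
    and "(R0 * y1 - R1 * y0) / (x0 * y1 - x1 * y0) * x1 + (x0 * R1 - x1 * R0) / (x0 * y1 - x1 * y0) * y1 = R1"
proof -
  have e1: "(R0 * y1 - R1 * y0) * x0 + (x0 * R1 - x1 * R0) * y0 = R0 * (x0 * y1 - x1 * y0)"
    by (simp add: algebra_simps)
  have e2: "(R0 * y1 - R1 * y0) * x1 + (x0 * R1 - x1 * R0) * y1 = R1 * (x0 * y1 - x1 * y0)"
    by (simp add: algebra_simps)
  show "(R0 * y1 - R1 * y0) / (x0 * y1 - x1 * y0) * x0 + (x0 * R1 - x1 * R0) / (x0 * y1 - x1 * y0) * y0 = R0"
    using d e1 by (simp add: divide_simps)
  show "(R0 * y1 - R1 * y0) / (x0 * y1 - x1 * y0) * x1 + (x0 * R1 - x1 * R0) / (x0 * y1 - x1 * y0) * y1 = R1"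
    using d e2 by (simp add: divide_simps)
qed

lemma kernel:
  fixes M N k :: nat and t :: complex and \<sigma> :: bool and L :: "nat \<Rightarrow> complex poly"
  assumes M: "M > 0" "N < M" and k: "1 \<le> k"
    and L_monic: "\<And>j. degree (L j) = j \<and> lead_coeff (L j) = 1"
    and L_orth: "\<And>j p. degree p < j \<Longrightarrow>
        (LINT x:{0<..}|lborel. poly (L j) (complex_of_real x) * poly p (complex_of_real x)
           * complex_of_real (w0 M N x)) = 0"
    and nz: "skew M N t \<sigma> (L k) (L (k - 1)) \<noteq> 0"
    and f0: "fmap M N t \<sigma> (smult a (L k) + smult b (L (k - 1))) = 0"
  shows "a = 0 \<and> b = 0"
proof -
  define P where "P = smult a (L k) + smult b (L (k - 1))"
  obtain q R where qR: "degree R \<le> 1" "P = Dx M N t q + R" using decomp_exists[OF M(1)] by blast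
  have "R = 0" using fmap_eq[OF M(1) qR] f0 unfolding P_def by simp
  then have PD: "P = Dx M N t q" using qR by simp
  have Lnz: "L j \<noteq> 0" for j using L_monic[of j] by auto
  have degP: "degree P \<le> k"
    unfolding P_def using L_monic[of k] L_monic[of "k - 1"]
    by (intro degree_add_le order.trans[OF degree_smult_le]) auto
  show ?thesis
  proof (cases "q = 0")
    case True
    then have P0: "P = 0" using PD by simp
    have lk: "coeff (L k) k = 1" using L_monic[of k] by metis
    have lk1: "coeff (L (k - 1)) k = 0" using L_monic[of "k - 1"] k by (intro coeff_eq_0) simp
    have "coeff P k = a" unfolding P_def using lk lk1 by simp
    then have a0: "a = 0" using P0 by simp
    then have "smult b (L (k - 1)) = 0" using P0 unfolding P_def by simp
    then have "b = 0" using Lnz by simp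
    then show ?thesis using a0 by simp
  next
    case False
    have "degree (Dx M N t q) = degree q + 2" by (rule Dx_degree(1)[OF False M(1)])
    then have dq: "degree q < k - 1" using degP PD by simp
    have sD: "skew M N t \<sigma> P (L j) = 0" if "degree q < j" for j
    proof -
      have "skew M N t \<sigma> P (L j) =
          - (LINT x:{0<..}|lborel. poly q (complex_of_real x) * poly (L j) (complex_of_real x) * complex_of_real (w0 M N x))"
        unfolding PD by (rule skew_D[OF M])
      also have "(LINT x:{0<..}|lborel. poly q (complex_of_real x) * poly (L j) (complex_of_real x) * complex_of_real (w0 M N x))
          = (LINT x:{0<..}|lborel. poly (L j) (complex_of_real x) * poly q (complex_of_real x) * complex_of_real (w0 M N x))"
        by (simp add: mult.commute mult.left_commute)
      also have "\<dots> = 0" by (rule L_orth[OF that])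
      finally show ?thesis by simp
    qed
    have lin: "skew M N t \<sigma> P g = a * skew M N t \<sigma> (L k) g + b * skew M N t \<sigma> (L (k - 1)) g" for g
      unfolding P_def by (rule skew_lin[OF M])
    have self0: "skew M N t \<sigma> g g = 0" for g
    proof -
      have "skew M N t \<sigma> g g = - skew M N t \<sigma> g g" by (rule skew_antisym[OF M])
      then show ?thesis by simp
    qed
    have "a * skew M N t \<sigma> (L k) (L (k - 1)) = 0"
      using sD[of "k - 1"] dq lin[of "L (k - 1)"] self0[of "L (k - 1)"] by simp
    then have a0: "a = 0" using nz by simp
    have "b * skew M N t \<sigma> (L (k - 1)) (L k) = 0"
      using sD[of k] dq lin[of "L k"] self0[of "L k"] a0 by simp
    moreover have "skew M N t \<sigma> (L (k - 1)) (L k) \<noteq> 0"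
      using skew_antisym[OF M, of t \<sigma> "L (k - 1)" "L k"] nz by simp
    ultimately have "b = 0" by simp
    then show ?thesis using a0 by simp
  qed
qed

theorem lemma1:
  fixes M N k :: nat and t :: complex and \<sigma> :: bool and L :: "nat \<Rightarrow> complex poly"
  assumes "0 < N" and "N < M" and "1 \<le> k"
    and L_monic: "\<And>j. degree (L j) = j \<and> lead_coeff (L j) = 1"
    and L_orth: "\<And>j p. degree p < j \<Longrightarrow>
        (LINT x:{0<..}|lborel. poly (L j) (complex_of_real x) * poly p (complex_of_real x)
           * complex_of_real (w0 M N x)) = 0"
    and nz: "skew M N t \<sigma> (L k) (L (k - 1)) \<noteq> 0"
  shows "(\<forall>P. \<exists>!(q, R). degree R \<le> 1 \<and> P = Dop M N t \<sigma> q + R)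
         \<and> bij_betw (fmap M N t \<sigma>)
             {smult a (L k) + smult b (L (k - 1)) | a b. True} {R. degree R \<le> 1}"
proof -
  have M: "M > 0" "N < M" using assms(1,2) by auto
  have part1: "\<exists>!(q, R). degree R \<le> 1 \<and> P = Dop M N t \<sigma> q + R" for P
  proof -
    obtain q R where qR: "degree R \<le> 1" "P = Dx M N t q + R" using decomp_exists[OF M(1)] by blast
    show ?thesis
    proof (rule ex1I[of _ "(q, R)"])
      show "case (q, R) of (q, R) \<Rightarrow> degree R \<le> 1 \<and> P = Dop M N t \<sigma> q + R"
        using qR by (simp add: Dop_eq[OF M(1)])
    next
      fix z assume z: "case z of (q, R) \<Rightarrow> degree R \<le> 1 \<and> P = Dop M N t \<sigma> q + R"
      obtain q' R' where zz: "z = (q', R')" by (cases z)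
      have q'R': "degree R' \<le> 1" "P = Dx M N t q' + R'" using z zz by (auto simp: Dop_eq[OF M(1)])
      have "Dx M N t q' + R' = Dx M N t q + R" using q'R'(2) qR(2) by simp
      from decomp_unique[OF M(1) q'R'(1) qR(1) this] show "z = (q, R)" using zz by simp
    qed
  qed
  define S where "S = {smult a (L k) + smult b (L (k - 1)) | a b. True}"
  define r1 where "r1 = fmap M N t \<sigma> (L k)"
  define r2 where "r2 = fmap M N t \<sigma> (L (k - 1))"
  have fS: "fmap M N t \<sigma> (smult a (L k) + smult b (L (k - 1))) = smult a r1 + smult b r2" for a b
    unfolding r1_def r2_def by (rule fmap_lin[OF M(1)])
  have ker: "smult a r1 + smult b r2 = 0 \<Longrightarrow> a = 0 \<and> b = 0" for a b
    using kernel[OF M assms(3) L_monic L_orth nz, of a b] fS by simp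
  have dr: "degree r1 \<le> 1" "degree r2 \<le> 1" unfolding r1_def r2_def by (rule fmap_deg[OF M(1)])+
  define det where "det = coeff r1 0 * coeff r2 1 - coeff r1 1 * coeff r2 0"
  have c01: "coeff (smult a r1 + smult b r2) 0 = a * coeff r1 0 + b * coeff r2 0"
    "coeff (smult a r1 + smult b r2) 1 = a * coeff r1 1 + b * coeff r2 1" for a b by simp_all
  have dsum: "degree (smult a r1 + smult b r2) \<le> 1" for a b
    using dr by (intro degree_add_le order.trans[OF degree_smult_le]) auto
  have zero_of: "smult a r1 + smult b r2 = 0" if "a * coeff r1 0 + b * coeff r2 0 = 0"
    "a * coeff r1 1 + b * coeff r2 1 = 0" for a b
    by (rule deg1_eq[OF dsum]) (use that in simp_all)
  have det0: "det \<noteq> 0"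
  proof
    assume d: "det = 0"
    show False
    proof (cases "coeff r2 1 = 0 \<and> coeff r1 1 = 0")
      case False
      have "smult (coeff r2 1) r1 + smult (- coeff r1 1) r2 = 0"
        by (rule zero_of) (use d in \<open>simp_all add: det_def algebra_simps\<close>)
      then show False using ker False by fastforce
    next
      case c1: True
      show False
      proof (cases "coeff r2 0 = 0 \<and> coeff r1 0 = 0")
        case False
        have "smult (coeff r2 0) r1 + smult (- coeff r1 0) r2 = 0"
          by (rule zero_of) (use c1 in \<open>simp_all add: algebra_simps\<close>)
        then show False using ker False by fastforce
      next
        case True
        have "smult 1 r1 + smult 0 r2 = 0"
          by (rule zero_of) (use c1 True in simp_all)
        then show False using ker by fastforce
      qed
    qed
  qed
  have inj: "inj_on (fmap M N t \<sigma>) S"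
  proof (rule inj_onI)
    fix x y assume x: "x \<in> S" and y: "y \<in> S" and e: "fmap M N t \<sigma> x = fmap M N t \<sigma> y"
    obtain a1 b1 where x': "x = smult a1 (L k) + smult b1 (L (k - 1))" using x by (auto simp: S_def)
    obtain a2 b2 where y': "y = smult a2 (L k) + smult b2 (L (k - 1))" using y by (auto simp: S_def)
    have "smult a1 r1 + smult b1 r2 = smult a2 r1 + smult b2 r2" using e x' y' fS by simp
    then have "smult (a1 - a2) r1 + smult (b1 - b2) r2 = 0"
      by (simp add: smult_diff_left algebra_simps)
    then have "a1 - a2 = 0 \<and> b1 - b2 = 0" by (rule ker)
    then show "x = y" using x' y' by simp
  qed
  have img: "fmap M N t \<sigma> ` S = {R. degree R \<le> 1}"
  proof
    show "fmap M N t \<sigma> ` S \<subseteq> {R. degree R \<le> 1}" using fmap_deg[OF M(1)] by auto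
  next
    show "{R. degree R \<le> 1} \<subseteq> fmap M N t \<sigma> ` S"
    proof
      fix R :: "complex poly" assume "R \<in> {R. degree R \<le> 1}"
      then have R: "degree R \<le> 1" by simp
      define a where "a = (coeff R 0 * coeff r2 1 - coeff R 1 * coeff r2 0) / det"
      define b where "b = (coeff r1 0 * coeff R 1 - coeff r1 1 * coeff R 0) / det"
      have "smult a r1 + smult b r2 = R"
      proof (rule deg1_eq[OF dsum R])
        show "coeff (smult a r1 + smult b r2) 0 = coeff R 0"
          unfolding c01 a_def b_def det_def by (rule cramer(1)) (use det0 in \<open>simp add: det_def\<close>)
        show "coeff (smult a r1 + smult b r2) 1 = coeff R 1"
          unfolding c01 a_def b_def det_def by (rule cramer(2)) (use det0 in \<open>simp add: det_def\<close>)
      qed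
      moreover have "smult a (L k) + smult b (L (k - 1)) \<in> S" by (auto simp: S_def)
      ultimately show "R \<in> fmap M N t \<sigma> ` S" using fS by (metis image_eqI)
    qed
  qed
  show ?thesis using part1 inj img unfolding S_def[symmetric] bij_betw_def by blast
qed

end
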